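(* The metric space $(\mathcal{J},d_{\mathcal{J}})$ is not locally compact.
   Context: An interval partition is a set $\beta$ of disjoint open subintervals (blocks) of some interval $[0,L]$ that cover $[0,L]$ up to a Lebesgue-null set; write $\|\beta\|:=L$, $\mathrm{Leb}(U)$ for the length of a block $U$, and $\mathcal{I}_H$ for the set of interval partitions. A correspondence between $\beta,\gamma\in\mathcal{I}_H$ is a finite sequence $(U_j,V_j)_{j\in[n]}$, $n\ge0$, of pairs in $\beta\times\gamma$ with $(U_j)_j$, $(V_j)_j$ strictly increasing in left-to-right order. $\mathcal{J}$ is the set of pairs $(\eta,f)$ with $\eta\in\mathcal{I}_H$ and $f\colon[0,\infty]\to[0,\infty)$ right-continuous nondecreasing, constant on every block of $\eta$ and on $[\|\eta\|,\infty]$; $f(U)$ denotes its value on block $U$. $d_{\mathcal{J}}((\eta,f),(\beta,g))$ is the infimum over correspondences $(U_j,V_j)_{j\in[n]}$ between $\eta$ and $\beta$ of the maximum of $\sum_{j}|\mathrm{Leb}(U_j)-\mathrm{Leb}(V_j)|+\|\eta\|-\sum_j\mathrm{Leb}(U_j)$, $\sum_{j}|\mathrm{Leb}(U_j)-\mathrm{Leb}(V_j)|+\|\beta\|-\sum_j\mathrm{Leb}(V_j)$, $\sup_j|f(U_j)-g(V_j)|$ and $|f(\infty)-g(\infty)|$. *)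

theory Defs
  imports "HOL-Analysis.Analysis"
begin

definition is_IP_on :: "real set set \<Rightarrow> real \<Rightarrow> bool" where
  "is_IP_on \<beta> L \<longleftrightarrow> 0 \<le> L
     \<and> (\<forall>U\<in>\<beta>. \<exists>a b. 0 \<le> a \<and> a < b \<and> b \<le> L \<and> U = {a<..<b})
     \<and> disjoint \<beta>
     \<and> {0..L} - \<Union>\<beta> \<in> null_sets lborel"

definition IH :: "real set set set" where
  "IH = {\<beta>. \<exists>L. is_IP_on \<beta> L}"

text \<open>The total length of an interval partition (uniquely determined).\<close>
definition IPnorm :: "real set set \<Rightarrow> real" where
  "IPnorm \<beta> = (THE L. is_IP_on \<beta> L)"

definition Leb :: "real set \<Rightarrow> real" where
  "Leb U = measure lborel U"

definition block_less :: "real set \<Rightarrow> real set \<Rightarrow> bool" where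
  "block_less U V \<longleftrightarrow> (\<forall>x\<in>U. \<forall>y\<in>V. x < y)"

definition correspondence :: "real set set \<Rightarrow> real set set \<Rightarrow> (real set \<times> real set) list \<Rightarrow> bool" where
  "correspondence \<beta> \<gamma> cs \<longleftrightarrow> set cs \<subseteq> \<beta> \<times> \<gamma>
     \<and> sorted_wrt (\<lambda>p q. block_less (fst p) (fst q)) cs
     \<and> sorted_wrt (\<lambda>p q. block_less (snd p) (snd q)) cs"

text \<open>Functions on [0,\<infinity>] are modelled with domain ennreal = [0,\<infinity>].\<close>
definition Jspace :: "(real set set \<times> (ennreal \<Rightarrow> real)) set" where
  "Jspace = {(\<eta>, f). \<eta> \<in> IH
      \<and> (\<forall>x. 0 \<le> f x)
      \<and> mono f
      \<and> (\<forall>x. continuous (at_right x) f)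
      \<and> (\<forall>U\<in>\<eta>. \<forall>x\<in>U. \<forall>y\<in>U. f (ennreal x) = f (ennreal y))
      \<and> (\<forall>x. ennreal (IPnorm \<eta>) \<le> x \<longrightarrow> f x = f (ennreal (IPnorm \<eta>)))}"

definition fblock :: "(ennreal \<Rightarrow> real) \<Rightarrow> real set \<Rightarrow> real" where
  "fblock f U = f (ennreal (SOME x. x \<in> U))"

definition corr_cost ::
  "real set set \<times> (ennreal \<Rightarrow> real) \<Rightarrow> real set set \<times> (ennreal \<Rightarrow> real)
     \<Rightarrow> (real set \<times> real set) list \<Rightarrow> real" where
  "corr_cost p q cs =
     (let \<eta> = fst p; f = snd p; \<beta> = fst q; g = snd q;
          D = sum_list (map (\<lambda>(U,V). \<bar>Leb U - Leb V\<bar>) cs)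
      in max (max (D + IPnorm \<eta> - sum_list (map (\<lambda>(U,V). Leb U) cs))
                  (D + IPnorm \<beta> - sum_list (map (\<lambda>(U,V). Leb V) cs)))
             (max (foldr max (map (\<lambda>(U,V). \<bar>fblock f U - fblock g V\<bar>) cs) 0)
                  \<bar>f top - g top\<bar>))"

definition dJ ::
  "real set set \<times> (ennreal \<Rightarrow> real) \<Rightarrow> real set set \<times> (ennreal \<Rightarrow> real) \<Rightarrow> real" where
  "dJ p q = Inf {corr_cost p q cs | cs. correspondence (fst p) (fst q) cs}"

end

theory Submission
  imports Defs
begin
lemma IP_unique:
  assumes "is_IP_on \<eta> L" "is_IP_on \<eta> L'" shows "L = L'"
proof (rule ccontr)
  assume "L \<noteq> L'"
  then consider "L < L'" | "L' < L" by linarith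
  then show False
  proof cases
    case 1
    show False
    proof -
      have sub: "{L<..L'} \<subseteq> {0..L'} - \<Union>\<eta>"
        using assms(1) 1 unfolding is_IP_on_def by fastforce
      have "{L<..L'} \<in> null_sets lborel"
        using null_sets_subset[OF _ _ sub] assms(2) unfolding is_IP_on_def by auto
      then have "measure lborel {L<..L'} = 0" by (rule measure_eq_0_null_sets)
      then show False using 1 by simp
    qed
  next
    case 2
    show False
    proof -
      have sub: "{L'<..L} \<subseteq> {0..L} - \<Union>\<eta>"
        using assms(2) 2 unfolding is_IP_on_def by fastforce
      have "{L'<..L} \<in> null_sets lborel"
        using null_sets_subset[OF _ _ sub] assms(1) unfolding is_IP_on_def by auto
      then have "measure lborel {L'<..L} = 0" by (rule measure_eq_0_null_sets)
      then show False using 2 by simp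
    qed
  qed
qed

lemma IPnorm_eq: "is_IP_on \<eta> L \<Longrightarrow> IPnorm \<eta> = L"
  unfolding IPnorm_def using IP_unique by blast

lemma block_sum_le_set:
  assumes "is_IP_on \<eta> L" "finite F" "F \<subseteq> \<eta>" "\<Union>F \<subseteq> S" "S \<in> fmeasurable lborel"
  shows "sum Leb F \<le> measure lborel S"
proof -
  have blk: "\<And>U. U \<in> F \<Longrightarrow> \<exists>a b. 0 \<le> a \<and> a < b \<and> b \<le> L \<and> U = {a<..<b}"
    using assms unfolding is_IP_on_def by blast
  have fm: "U \<in> fmeasurable lborel" if UF: "U \<in> F" for U
  proof -
    obtain a b where "U = {a<..<b}" "a < b" using blk[OF UF] by blast
    then show ?thesis by (simp add: fmeasurable_def)
  qed
  have dj: "disjoint F" using assms unfolding is_IP_on_def by (meson pairwise_subset)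
  have "sum Leb F = measure lborel (\<Union>F)"
    unfolding Leb_def using measure_Union'[OF assms(2) fm dj] by simp
  also have "\<dots> \<le> measure lborel S"
  proof (rule measure_mono_fmeasurable)
    show "\<Union>F \<subseteq> S" by fact
    show "\<Union>F \<in> sets lborel" using fm assms(2) by blast
    show "S \<in> fmeasurable lborel" by fact
  qed
  finally show ?thesis .
qed

lemma block_sum_le:
  assumes "is_IP_on \<eta> L" "finite F" "F \<subseteq> \<eta>"
  shows "sum Leb F \<le> L"
proof -
  have "\<Union>F \<subseteq> {0..L}"
  proof
    fix x assume "x \<in> \<Union>F"
    then obtain U where "U \<in> F" "x \<in> U" by blast
    then obtain a b where "0 \<le> a" "b \<le> L" "U = {a<..<b}"
      using assms unfolding is_IP_on_def by blast
    then show "x \<in> {0..L}" using \<open>x \<in> U\<close> by auto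
  qed
  moreover have "{0..L} \<in> fmeasurable lborel" by (rule fmeasurable_compact) auto
  ultimately have "sum Leb F \<le> measure lborel {0..L}"
    using block_sum_le_set[OF assms] by blast
  then show ?thesis using assms(1) unfolding is_IP_on_def by simp
qed

lemma IH_block: "\<eta> \<in> IH \<Longrightarrow> U \<in> \<eta> \<Longrightarrow> U \<noteq> {} \<and> Leb U > 0"
  unfolding IH_def is_IP_on_def Leb_def by auto

lemma distinct_fst:
  assumes "\<forall>p\<in>set cs. fst p \<noteq> {}" "sorted_wrt (\<lambda>p q. block_less (fst p) (fst q)) cs"
  shows "distinct (map fst cs)"
  using assms
proof (induction cs)
  case Nil then show ?case by simp
next
  case (Cons x xs)
  have "fst x \<notin> fst ` set xs"
  proof
    assume "fst x \<in> fst ` set xs"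
    then obtain y where "y \<in> set xs" "fst y = fst x" by auto
    then have "block_less (fst x) (fst x)" using Cons.prems by auto
    then show False using Cons.prems unfolding block_less_def by fastforce
  qed
  then show ?case using Cons by auto
qed

lemma distinct_snd:
  assumes "\<forall>p\<in>set cs. snd p \<noteq> {}" "sorted_wrt (\<lambda>p q. block_less (snd p) (snd q)) cs"
  shows "distinct (map snd cs)"
  using assms
proof (induction cs)
  case Nil then show ?case by simp
next
  case (Cons x xs)
  have "snd x \<notin> snd ` set xs"
  proof
    assume "snd x \<in> snd ` set xs"
    then obtain y where "y \<in> set xs" "snd y = snd x" by auto
    then have "block_less (snd x) (snd x)" using Cons.prems by auto
    then show False using Cons.prems unfolding block_less_def by fastforce
  qed
  then show ?case using Cons by auto
qed

lemma sumU_eq: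
  assumes "distinct (map fst cs)"
  shows "sum_list (map (\<lambda>(U,V). Leb U) cs) = sum Leb (fst ` set cs)"
proof -
  have "sum_list (map (\<lambda>(U,V). Leb U) cs) = sum_list (map Leb (map fst cs))"
    by (induction cs) auto
  also have "\<dots> = sum Leb (set (map fst cs))" by (rule sum_list_distinct_conv_sum_set[OF assms])
  finally show ?thesis by simp
qed

lemma D_ge: "sum_list (map (\<lambda>(U,V). \<bar>Leb U - Leb V\<bar>) cs)
   \<ge> sum_list (map (\<lambda>(U,V). Leb V) cs) - sum_list (map (\<lambda>(U,V). Leb U) cs)"
  by (induction cs) auto

lemma D_nonneg: "sum_list (map (\<lambda>(U,V). \<bar>Leb U - Leb V\<bar>) cs) \<ge> 0"
  by (rule sum_list_nonneg) auto

lemma D_ge_mem: "(U,V) \<in> set cs \<Longrightarrow> sum_list (map (\<lambda>(U,V). \<bar>Leb U - Leb V\<bar>) cs) \<ge> \<bar>Leb U - Leb V\<bar>"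
proof (induction cs)
  case Nil then show ?case by simp
next
  case (Cons x xs)
  obtain A B where x: "x = (A,B)" by fastforce
  show ?case
  proof (cases "x = (U,V)")
    case True then show ?thesis using D_nonneg[of xs] x by simp
  next
    case False
    then have "(U,V) \<in> set xs" using Cons.prems x by auto
    then show ?thesis using Cons.IH x by (simp add: add_increasing)
  qed
qed

lemma cost_ge1: "corr_cost (\<eta>,f) (\<beta>,g) cs \<ge> sum_list (map (\<lambda>(U,V). \<bar>Leb U - Leb V\<bar>) cs) + IPnorm \<eta> - sum_list (map (\<lambda>(U,V). Leb U) cs)"
  unfolding corr_cost_def Let_def by simp

lemma cost_ge2: "corr_cost (\<eta>,f) (\<beta>,g) cs \<ge> sum_list (map (\<lambda>(U,V). \<bar>Leb U - Leb V\<bar>) cs) + IPnorm \<beta> - sum_list (map (\<lambda>(U,V). Leb V) cs)"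
  unfolding corr_cost_def Let_def by simp

lemma cost_nonneg: "corr_cost p q cs \<ge> 0"
  unfolding corr_cost_def Let_def by simp

lemma dJ_lessD: "dJ p q < r \<Longrightarrow> \<exists>cs. correspondence (fst p) (fst q) cs \<and> corr_cost p q cs < r"
proof -
  assume a: "dJ p q < r"
  have ne: "{corr_cost p q cs | cs. correspondence (fst p) (fst q) cs} \<noteq> {}"
    by (auto intro!: exI[of _ "[]"] simp: correspondence_def)
  show ?thesis using cInf_lessD[OF ne] a unfolding dJ_def by blast
qed

lemma dJ_le: "correspondence (fst p) (fst q) cs \<Longrightarrow> dJ p q \<le> corr_cost p q cs"
  unfolding dJ_def
  by (rule cInf_lower) (auto intro!: bdd_belowI[of _ 0] cost_nonneg)

definition monoS :: "(real set \<times> real set) set \<Rightarrow> bool" where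
  "monoS P \<longleftrightarrow> (\<forall>p\<in>P. \<forall>q\<in>P. p \<noteq> q \<longrightarrow>
     (block_less (fst p) (fst q) \<and> block_less (snd p) (snd q)) \<or>
     (block_less (fst q) (fst p) \<and> block_less (snd q) (snd p)))"

definition adm :: "real set set \<Rightarrow> real set set \<Rightarrow> (real set \<times> real set) set \<Rightarrow> bool" where
  "adm \<eta> \<beta> P \<longleftrightarrow> finite P \<and> P \<subseteq> \<eta> \<times> \<beta> \<and> monoS P"

definition costS ::
  "real set set \<times> (ennreal \<Rightarrow> real) \<Rightarrow> real set set \<times> (ennreal \<Rightarrow> real)
     \<Rightarrow> (real set \<times> real set) set \<Rightarrow> real" where
  "costS x y P =
     max (max (sum (\<lambda>(U,V). \<bar>Leb U - Leb V\<bar>) P + IPnorm (fst x) - sum (\<lambda>(U,V). Leb U) P)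
              (sum (\<lambda>(U,V). \<bar>Leb U - Leb V\<bar>) P + IPnorm (fst y) - sum (\<lambda>(U,V). Leb V) P))
         (max (Max (insert 0 ((\<lambda>(U,V). \<bar>fblock (snd x) U - fblock (snd y) V\<bar>) ` P)))
              \<bar>snd x top - snd y top\<bar>)"

lemma foldr_max: "foldr max (map h cs) (0::real) = Max (insert 0 (h ` set cs))"
proof (induction cs)
  case Nil then show ?case by simp
next
  case (Cons a cs)
  have "Max (insert 0 (h ` set (a # cs))) = Max (insert (h a) (insert 0 (h ` set cs)))"
    by (simp add: insert_commute)
  also have "\<dots> = max (h a) (Max (insert 0 (h ` set cs)))"
    by (rule Max_insert) auto
  finally show ?case using Cons by simp
qed

lemma corr_cost_eq: "distinct cs \<Longrightarrow> corr_cost x y cs = costS x y (set cs)"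
  unfolding corr_cost_def costS_def Let_def
  by (simp add: sum_list_distinct_conv_sum_set foldr_max)

lemma IH_IP: "\<eta> \<in> IH \<Longrightarrow> is_IP_on \<eta> (IPnorm \<eta>)"
  unfolding IH_def using IPnorm_eq by auto

lemma IH_blocks: "\<eta> \<in> IH \<Longrightarrow> U \<in> \<eta> \<Longrightarrow> \<exists>a b. 0 \<le> a \<and> a < b \<and> b \<le> IPnorm \<eta> \<and> U = {a<..<b}"
  using IH_IP unfolding is_IP_on_def by blast

lemma block_less_irrefl: "U \<noteq> {} \<Longrightarrow> \<not> block_less U U"
  unfolding block_less_def by auto

lemma block_less_end:
  assumes "a < b" "a' < b'" "block_less {a'<..<b'} {a<..<b}"
  shows "b' \<le> a"
proof (rule ccontr)
  assume nb: "\<not> b' \<le> a"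
  define x where "x = (a' + b') / 2"
  define y where "y = (a + b) / 2"
  have xin: "x \<in> {a'<..<b'}" using assms(2) unfolding x_def by simp
  have yin: "y \<in> {a<..<b}" using assms(1) unfolding y_def by simp
  have "x < y" using assms(3) xin yin unfolding block_less_def by blast
  then have "a' < b" using xin yin by simp
  define z where "z = (max a a' + min b b') / 2"
  have "max a a' < min b b'" using assms(1,2) nb \<open>a' < b\<close> by simp
  then have z1: "z \<in> {a'<..<b'}" and z2: "z \<in> {a<..<b}" unfolding z_def by auto
  have "z < z" using assms(3) z1 z2 unfolding block_less_def by blast
  then show False by simp
qed

lemma block_less_Inf:
  assumes "a < b" "a' < b'" "block_less {a'<..<b'} {a<..<b}"
  shows "Inf {a'<..<b'} < Inf {a<..<b}"
  using block_less_end[OF assms] assms by simp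

lemma adm_sub: "adm \<eta> \<beta> P \<Longrightarrow> Q \<subseteq> P \<Longrightarrow> adm \<eta> \<beta> Q"
  unfolding adm_def monoS_def by (meson finite_subset subset_iff order_trans)

lemma corr_adm:
  assumes "\<eta> \<in> IH" "\<beta> \<in> IH" "correspondence \<eta> \<beta> cs"
  shows "adm \<eta> \<beta> (set cs) \<and> distinct cs"
proof -
  have ne: "\<forall>p\<in>set cs. fst p \<noteq> {}" using assms IH_block unfolding correspondence_def
    by (metis mem_Sigma_iff prod.collapse subsetD)
  have d: "distinct (map fst cs)" using distinct_fst[OF ne] assms(3) unfolding correspondence_def by blast
  have "monoS (set cs)"
    unfolding monoS_def
  proof (intro ballI impI)
    fix p q assume p: "p \<in> set cs" and q: "q \<in> set cs" and pq: "p \<noteq> q"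
    obtain i j where i: "i < length cs" "cs ! i = p" and j: "j < length cs" "cs ! j = q"
      using p q by (metis in_set_conv_nth)
    have "i \<noteq> j" using i j pq by auto
    then consider "i < j" | "j < i" by linarith
    then show "(block_less (fst p) (fst q) \<and> block_less (snd p) (snd q)) \<or>
     (block_less (fst q) (fst p) \<and> block_less (snd q) (snd p))"
    proof cases
      case 1 then show ?thesis using assms(3) i j unfolding correspondence_def
        by (metis sorted_wrt_nth_less)
    next
      case 2 then show ?thesis using assms(3) i j unfolding correspondence_def
        by (metis sorted_wrt_nth_less)
    qed
  qed
  then show ?thesis using assms(3) d unfolding adm_def correspondence_def
    by (simp add: distinct_map)
qed

lemma adm_list:
  assumes "\<eta> \<in> IH" "adm \<eta> \<beta> P"
  shows "\<exists>cs. correspondence \<eta> \<beta> cs \<and> set cs = P \<and> distinct cs"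
proof -
  have "finite P" using assms unfolding adm_def by auto
  then show ?thesis using assms(2)
  proof (induction P rule: finite_remove_induct)
    case empty
    then show ?case by (auto simp: correspondence_def)
  next
    case (remove P)
    define k :: "real set \<times> real set \<Rightarrow> real" where "k = (\<lambda>p. Inf (fst p))"
    have "Min (k ` P) \<in> k ` P" using remove.hyps(1,2) by (intro Min_in) auto
    then obtain m where m1: "m \<in> P" "k m = Min (k ` P)" by auto
    have m: "m \<in> P" "\<forall>q\<in>P. k m \<le> k q"
      using m1 remove.hyps(1) by auto
    have PP: "P \<subseteq> \<eta> \<times> \<beta>" "monoS P" using remove.prems unfolding adm_def by auto
    have blk: "\<exists>a b. a < b \<and> fst p = {a<..<b}" if pP: "p \<in> P" for p
    proof -
      have "fst p \<in> \<eta>" using PP(1) pP by auto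
      then show ?thesis using IH_blocks[OF assms(1)] by blast
    qed
    have mless: "block_less (fst m) (fst q) \<and> block_less (snd m) (snd q)" if qP: "q \<in> P" and qm: "q \<noteq> m" for q
    proof -
      have "\<not> block_less (fst q) (fst m)"
      proof
        assume bl: "block_less (fst q) (fst m)"
        obtain a b where ab: "a < b" "fst m = {a<..<b}" using blk[OF m(1)] by blast
        obtain a' b' where ab': "a' < b'" "fst q = {a'<..<b'}" using blk[OF qP] by blast
        have "k q < k m" unfolding k_def using block_less_Inf[of a b a' b'] ab ab' bl by simp
        then show False using m(2) qP by fastforce
      qed
      moreover have "(block_less (fst m) (fst q) \<and> block_less (snd m) (snd q)) \<or>
          (block_less (fst q) (fst m) \<and> block_less (snd q) (snd m))"
        using PP(2) m(1) qP qm unfolding monoS_def by blast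
      ultimately show ?thesis by blast
    qed
    obtain cs where cs: "correspondence \<eta> \<beta> cs" "set cs = P - {m}" "distinct cs"
      using remove.IH[OF m(1)] adm_sub[OF remove.prems] by blast
    show ?case
    proof (intro exI conjI)
      show "set (m # cs) = P" using cs m by auto
      show "distinct (m # cs)" using cs by auto
      have "\<forall>q\<in>set cs. block_less (fst m) (fst q) \<and> block_less (snd m) (snd q)"
        using cs(2) mless by blast
      moreover have "m \<in> \<eta> \<times> \<beta>" using PP(1) m(1) by blast
      ultimately show "correspondence \<eta> \<beta> (m # cs)"
        using cs(1) unfolding correspondence_def by simp
    qed
  qed
qed

lemma dJ_S:
  assumes "fst x \<in> IH" "fst y \<in> IH"
  shows "dJ x y = Inf {costS x y P | P. adm (fst x) (fst y) P}"
proof -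
  have "{corr_cost x y cs | cs. correspondence (fst x) (fst y) cs} = {costS x y P | P. adm (fst x) (fst y) P}"
  proof safe
    fix cs assume "correspondence (fst x) (fst y) cs"
    then show "\<exists>P. corr_cost x y cs = costS x y P \<and> adm (fst x) (fst y) P"
      using corr_adm[OF assms] corr_cost_eq by metis
  next
    fix P assume "adm (fst x) (fst y) P"
    then show "\<exists>cs. costS x y P = corr_cost x y cs \<and> correspondence (fst x) (fst y) cs"
      using adm_list[OF assms(1)] corr_cost_eq by metis
  qed
  then show ?thesis unfolding dJ_def by simp
qed

lemma costS_nonneg: "costS x y P \<ge> 0"
  unfolding costS_def by simp

lemma dJ_leS:
  assumes "fst x \<in> IH" "fst y \<in> IH" "adm (fst x) (fst y) P"
  shows "dJ x y \<le> costS x y P"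
  unfolding dJ_S[OF assms(1,2)]
  by (rule cInf_lower) (use assms(3) in \<open>auto intro!: bdd_belowI[of _ 0] costS_nonneg\<close>)

lemma dJ_lessS:
  assumes "fst x \<in> IH" "fst y \<in> IH" "dJ x y < r"
  shows "\<exists>P. adm (fst x) (fst y) P \<and> costS x y P < r"
proof -
  have ne: "{costS x y P | P. adm (fst x) (fst y) P} \<noteq> {}"
    by (auto intro!: exI[of _ "{}"] simp: adm_def monoS_def)
  show ?thesis using cInf_lessD[OF ne] assms(3) unfolding dJ_S[OF assms(1,2)] by blast
qed

lemma dJ_nonneg: "dJ x y \<ge> 0"
proof -
  have ne: "{corr_cost x y cs | cs. correspondence (fst x) (fst y) cs} \<noteq> {}"
    by (auto intro!: exI[of _ "[]"] simp: correspondence_def)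
  show ?thesis unfolding dJ_def by (rule cInf_greatest[OF ne]) (auto simp: cost_nonneg)
qed

lemma costS_ge1: "costS x y P \<ge> sum (\<lambda>(U,V). \<bar>Leb U - Leb V\<bar>) P + IPnorm (fst x) - sum (\<lambda>(U,V). Leb U) P"
  unfolding costS_def by simp
lemma costS_ge2: "costS x y P \<ge> sum (\<lambda>(U,V). \<bar>Leb U - Leb V\<bar>) P + IPnorm (fst y) - sum (\<lambda>(U,V). Leb V) P"
  unfolding costS_def by simp
lemma costS_ge3:
  assumes "finite P" "(U,V) \<in> P"
  shows "costS x y P \<ge> \<bar>fblock (snd x) U - fblock (snd y) V\<bar>"
proof -
  have "\<bar>fblock (snd x) U - fblock (snd y) V\<bar> \<le> Max (insert 0 ((\<lambda>(U,V). \<bar>fblock (snd x) U - fblock (snd y) V\<bar>) ` P))"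
    by (rule Max_ge) (use assms in \<open>auto intro!: image_eqI[of _ _ "(U,V)"]\<close>)
  then show ?thesis unfolding costS_def by (metis max.coboundedI1 max.coboundedI2)
qed
lemma costS_ge4: "costS x y P \<ge> \<bar>snd x top - snd y top\<bar>"
  unfolding costS_def by simp
lemma DS_nonneg: "sum (\<lambda>(U,V). \<bar>Leb U - Leb V\<bar>) P \<ge> 0"
  by (rule sum_nonneg) auto
lemma DS_ge: "finite P \<Longrightarrow> (U,V) \<in> P \<Longrightarrow> sum (\<lambda>(U,V). \<bar>Leb U - Leb V\<bar>) P \<ge> \<bar>Leb U - Leb V\<bar>"
  using member_le_sum[of "(U,V)" P "\<lambda>(U,V). \<bar>Leb U - Leb V\<bar>"] by auto

lemma adm_swap: "adm \<eta> \<beta> P \<Longrightarrow> adm \<beta> \<eta> (prod.swap ` P)"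
  unfolding adm_def monoS_def by auto

lemma costS_swap:
  assumes "finite P"
  shows "costS y x (prod.swap ` P) = costS x y P"
proof -
  have i: "inj_on prod.swap P" unfolding inj_on_def by (metis swap_swap)
  have s1: "sum (\<lambda>(U,V). \<bar>Leb U - Leb V\<bar>) (prod.swap ` P) = sum (\<lambda>(U,V). \<bar>Leb U - Leb V\<bar>) P"
    by (subst sum.reindex[OF i]) (auto simp: abs_minus_commute intro!: sum.cong)
  have s2: "sum (\<lambda>(U,V). Leb U) (prod.swap ` P) = sum (\<lambda>(U,V). Leb V) P"
    by (subst sum.reindex[OF i]) (auto intro!: sum.cong)
  have s3: "sum (\<lambda>(U,V). Leb V) (prod.swap ` P) = sum (\<lambda>(U,V). Leb U) P"
    by (subst sum.reindex[OF i]) (auto intro!: sum.cong)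
  have s4: "(\<lambda>(U,V). \<bar>fblock (snd y) U - fblock (snd x) V\<bar>) ` (prod.swap ` P)
     = (\<lambda>(U,V). \<bar>fblock (snd x) U - fblock (snd y) V\<bar>) ` P"
    by (force simp: image_iff abs_minus_commute)
  show ?thesis unfolding costS_def s1 s2 s3 s4
    by (simp add: abs_minus_commute max.commute)
qed

lemma corr_cost_swap: "corr_cost y x (map prod.swap cs) = corr_cost x y cs"
proof -
  have s1: "sum_list (map (\<lambda>(U,V). \<bar>Leb U - Leb V\<bar>) (map prod.swap cs)) = sum_list (map (\<lambda>(U,V). \<bar>Leb U - Leb V\<bar>) cs)"
    by (induction cs) (auto simp: abs_minus_commute)
  have s2: "sum_list (map (\<lambda>(U,V). Leb U) (map prod.swap cs)) = sum_list (map (\<lambda>(U,V). Leb V) cs)"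
    by (induction cs) auto
  have s3: "sum_list (map (\<lambda>(U,V). Leb V) (map prod.swap cs)) = sum_list (map (\<lambda>(U,V). Leb U) cs)"
    by (induction cs) auto
  have s4: "map (\<lambda>(U,V). \<bar>fblock (snd y) U - fblock (snd x) V\<bar>) (map prod.swap cs)
     = map (\<lambda>(U,V). \<bar>fblock (snd x) U - fblock (snd y) V\<bar>) cs"
    by (induction cs) (auto simp: abs_minus_commute)
  show ?thesis unfolding corr_cost_def Let_def s1 s2 s3 s4
    by (simp add: abs_minus_commute max.commute)
qed

lemma corr_swap: "correspondence \<eta> \<beta> cs \<Longrightarrow> correspondence \<beta> \<eta> (map prod.swap cs)"
  unfolding correspondence_def by (auto simp: sorted_wrt_map)

lemma dJ_commute: "dJ x y = dJ y x"
proof -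
  have "{corr_cost x y cs | cs. correspondence (fst x) (fst y) cs} = {corr_cost y x cs | cs. correspondence (fst y) (fst x) cs}"
  proof safe
    fix cs assume "correspondence (fst x) (fst y) cs"
    then show "\<exists>cs'. corr_cost x y cs = corr_cost y x cs' \<and> correspondence (fst y) (fst x) cs'"
      by (intro exI[of _ "map prod.swap cs"]) (simp add: corr_cost_swap corr_swap)
  next
    fix cs assume "correspondence (fst y) (fst x) cs"
    then show "\<exists>cs'. corr_cost y x cs = corr_cost x y cs' \<and> correspondence (fst x) (fst y) cs'"
      by (intro exI[of _ "map prod.swap cs"]) (simp add: corr_cost_swap[of x y] corr_swap)
  qed
  then show ?thesis unfolding dJ_def by simp
qed

lemma blocks_cmp:
  assumes "\<eta> \<in> IH" "U \<in> \<eta>" "U' \<in> \<eta>" "U \<noteq> U'"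
  shows "block_less U U' \<or> block_less U' U"
proof -
  obtain a b where ab: "a < b" "U = {a<..<b}" using IH_blocks[OF assms(1,2)] by blast
  obtain a' b' where ab': "a' < b'" "U' = {a'<..<b'}" using IH_blocks[OF assms(1,3)] by blast
  have "disjoint \<eta>" using IH_IP[OF assms(1)] unfolding is_IP_on_def by blast
  then have "disjnt U U'" using assms(2-4) unfolding disjoint_def pairwise_def by blast
  then have "b \<le> a' \<or> b' \<le> a"
  proof -
    { assume "\<not> (b \<le> a' \<or> b' \<le> a)"
      then have "max a a' < min b b'" using ab ab' by auto
      then have "(max a a' + min b b')/2 \<in> U \<inter> U'" using ab ab' by auto
      then have False using \<open>disjnt U U'\<close> unfolding disjnt_def by blast }
    then show ?thesis by blast
  qed
  then show ?thesis
  proof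
    assume "b \<le> a'"
    then have "block_less U U'" using ab ab' unfolding block_less_def by auto
    then show ?thesis by blast
  next
    assume "b' \<le> a"
    then have "block_less U' U" using ab ab' unfolding block_less_def by auto
    then show ?thesis by blast
  qed
qed

lemma blocks_disj_mem:
  assumes "\<beta> \<in> IH" "V \<in> \<beta>" "V' \<in> \<beta>" "m \<in> V" "m \<in> V'"
  shows "V = V'"
proof (rule ccontr)
  assume "V \<noteq> V'"
  have "disjoint \<beta>" using IH_IP[OF assms(1)] unfolding is_IP_on_def by blast
  then have "disjnt V V'" using assms(2,3) \<open>V \<noteq> V'\<close> unfolding disjoint_def pairwise_def by blast
  then show False using assms(4,5) unfolding disjnt_def by blast
qed

lemma measure_Union_IP:
  assumes "is_IP_on \<eta> L"
  shows "measure lborel (\<Union>\<eta>) \<ge> L" "\<Union>\<eta> \<in> sets lborel" "\<Union>\<eta> \<subseteq> {0..L}"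
proof -
  have op: "\<And>U. U \<in> \<eta> \<Longrightarrow> open U" using assms unfolding is_IP_on_def by auto
  show ms: "\<Union>\<eta> \<in> sets lborel" using op by (simp add: borel_open open_Union)
  show sub: "\<Union>\<eta> \<subseteq> {0..L}"
  proof
    fix x assume "x \<in> \<Union>\<eta>"
    then obtain U where "U \<in> \<eta>" "x \<in> U" by blast
    then obtain a b where "0 \<le> a" "b \<le> L" "U = {a<..<b}"
      using assms unfolding is_IP_on_def by blast
    then show "x \<in> {0..L}" using \<open>x \<in> U\<close> by auto
  qed
  have N: "{0..L} - \<Union>\<eta> \<in> null_sets lborel" using assms unfolding is_IP_on_def by auto
  have N2: "{0..L} - \<Union>\<eta> \<in> sets lborel" using N unfolding null_sets_def by blast
  have Ic: "{0..L} \<in> fmeasurable lborel" by (rule fmeasurable_compact) auto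
  have "measure lborel {0..L} \<le> measure lborel (\<Union>\<eta> \<union> ({0..L} - \<Union>\<eta>))"
  proof (rule measure_mono_fmeasurable)
    show "{0..L} \<subseteq> \<Union>\<eta> \<union> ({0..L} - \<Union>\<eta>)" by blast
    show "{0..L} \<in> sets lborel" by simp
    have "\<Union>\<eta> \<union> ({0..L} - \<Union>\<eta>) = {0..L}" using sub by blast
    then show "\<Union>\<eta> \<union> ({0..L} - \<Union>\<eta>) \<in> fmeasurable lborel" using Ic by simp
  qed
  also have "\<dots> \<le> measure lborel (\<Union>\<eta>) + measure lborel ({0..L} - \<Union>\<eta>)"
    by (rule measure_Un_le[OF ms N2])
  also have "measure lborel ({0..L} - \<Union>\<eta>) = 0" using N by (rule measure_eq_0_null_sets)
  finally show "measure lborel (\<Union>\<eta>) \<ge> L" using assms unfolding is_IP_on_def by simp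
qed

lemma approx_blocks:
  assumes "\<eta> \<in> IH" "e > 0"
  shows "\<exists>F. finite F \<and> F \<subseteq> \<eta> \<and> sum Leb F > IPnorm \<eta> - e"
proof -
  define L where "L = IPnorm \<eta>"
  have IP: "is_IP_on \<eta> L" using IH_IP[OF assms(1)] unfolding L_def .
  have op: "\<And>U. U \<in> \<eta> \<Longrightarrow> open U" using IP unfolding is_IP_on_def by auto
  have dj: "disjoint \<eta>" using IP unfolding is_IP_on_def by auto
  have cnt: "countable \<eta>" by (rule countable_disjoint_open_subsets[OF op dj])
  have fm: "U \<in> fmeasurable lborel" if UF: "U \<in> \<eta>" for U
  proof -
    obtain a b where "U = {a<..<b}" "a < b" using IP UF unfolding is_IP_on_def by blast
    then show ?thesis by (simp add: fmeasurable_def)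
  qed
  note MU = measure_Union_IP[OF IP]
  show ?thesis
  proof (cases "finite \<eta>")
    case True
    have "sum Leb \<eta> = measure lborel (\<Union>\<eta>)"
      unfolding Leb_def using measure_Union'[OF True fm dj] by simp
    then show ?thesis using True MU(1) assms(2) unfolding L_def by (intro exI[of _ \<eta>]) auto
  next
    case False
    define A where "A = from_nat_into \<eta>"
    have bij: "bij_betw A UNIV \<eta>" unfolding A_def by (rule bij_betw_from_nat_into[OF cnt False])
    have rng: "range A = \<eta>" using bij by (simp add: bij_betw_def)
    have inj: "inj A" using bij by (simp add: bij_betw_def)
    have dfam: "disjoint_family A"
      unfolding disjoint_family_on_def
    proof (intro ballI impI)
      fix i j :: nat assume "i \<noteq> j"
      then have "A i \<noteq> A j" using inj by (auto simp: inj_def)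
      moreover have "A i \<in> \<eta>" "A j \<in> \<eta>" using rng by auto
      ultimately show "A i \<inter> A j = {}" using dj unfolding disjoint_def pairwise_def disjnt_def by blast
    qed
    have rs: "range A \<subseteq> sets lborel" using rng fm fmeasurableD by blast
    have fin: "emeasure lborel (\<Union>(range A)) \<noteq> \<infinity>"
    proof -
      have "emeasure lborel (\<Union>(range A)) \<le> emeasure lborel {0..L}"
        using MU(2,3) rng by (intro emeasure_mono) auto
      then show ?thesis by (auto simp: emeasure_lborel_Icc_eq top_unique)
    qed
    have "(\<lambda>i. measure lborel (A i)) sums measure lborel (\<Union>(range A))"
      by (rule measure_UNION[OF rs dfam fin])
    then have "(\<lambda>n. \<Sum>i<n. measure lborel (A i)) \<longlonglongrightarrow> measure lborel (\<Union>\<eta>)"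
      unfolding sums_def rng .
    moreover have "measure lborel (\<Union>\<eta>) > L - e" using MU(1) assms(2) by simp
    ultimately have "eventually (\<lambda>n. (\<Sum>i<n. measure lborel (A i)) > L - e) sequentially"
      by (rule order_tendstoD)
    then obtain n where n: "(\<Sum>i<n. measure lborel (A i)) > L - e"
      by (auto simp: eventually_sequentially)
    have "sum Leb (A ` {..<n}) = (\<Sum>i<n. measure lborel (A i))"
      unfolding Leb_def by (subst sum.reindex) (use inj in \<open>auto simp: inj_on_def inj_def\<close>)
    then show ?thesis using n rng unfolding L_def by (intro exI[of _ "A ` {..<n}"]) auto
  qed
qed

lemma dJ_refl:
  assumes "x \<in> Jspace"
  shows "dJ x x = 0"
proof -
  obtain \<eta> f where x: "x = (\<eta>, f)" by fastforce
  have eta: "\<eta> \<in> IH" using assms x unfolding Jspace_def by auto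
  have "dJ x x \<le> e" if e: "e > 0" for e
  proof -
    obtain F where F: "finite F" "F \<subseteq> \<eta>" "sum Leb F > IPnorm \<eta> - e"
      using approx_blocks[OF eta e] by blast
    define P where "P = (\<lambda>U. (U,U)) ` F"
    have iP: "inj_on (\<lambda>U. (U,U)) F" by (auto simp: inj_on_def)
    have adm: "adm \<eta> \<eta> P"
      unfolding adm_def monoS_def P_def using F blocks_cmp[OF eta] by auto
    have s1: "sum (\<lambda>(U,V). \<bar>Leb U - Leb V\<bar>) P = 0" unfolding P_def by (simp add: sum.reindex[OF iP])
    have s2: "sum (\<lambda>(U,V). Leb U) P = sum Leb F" unfolding P_def by (simp add: sum.reindex[OF iP])
    have s3: "sum (\<lambda>(U,V). Leb V) P = sum Leb F" unfolding P_def by (simp add: sum.reindex[OF iP])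
    have s4: "(\<lambda>(U,V). \<bar>fblock f U - fblock f V\<bar>) ` P \<subseteq> {0}" unfolding P_def by auto
    have "Max (insert 0 ((\<lambda>(U,V). \<bar>fblock f U - fblock f V\<bar>) ` P)) = 0"
      using s4 by (metis Max_singleton Un_insert_left sup.absorb_iff1 insert_is_Un)
    then have "costS x x P = max (IPnorm \<eta> - sum Leb F) 0"
      unfolding costS_def s1 s2 s3 using x by simp
    also have "\<dots> \<le> e" using F(3) e by simp
    finally have "costS x x P \<le> e" .
    moreover have "dJ x x \<le> costS x x P" using dJ_leS[of x x P] adm eta x by simp
    ultimately show ?thesis by simp
  qed
  then show ?thesis using dJ_nonneg[of x x]
    by (metis dual_order.antisym field_le_epsilon add_0)
qed

lemma adm_inj:
  assumes "\<eta> \<in> IH" "\<beta> \<in> IH" "adm \<eta> \<beta> P"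
  shows "inj_on fst P" "inj_on snd P"
proof -
  have PP: "P \<subseteq> \<eta> \<times> \<beta>" "monoS P" using assms(3) unfolding adm_def by auto
  show "inj_on fst P"
  proof (rule inj_onI)
    fix p q assume pq: "p \<in> P" "q \<in> P" "fst p = fst q"
    show "p = q"
    proof (rule ccontr)
      assume "p \<noteq> q"
      then have "block_less (fst p) (fst q) \<or> block_less (fst q) (fst p)"
        using PP(2) pq unfolding monoS_def by blast
      moreover have "fst p \<noteq> {}" using IH_block[OF assms(1)] PP(1) pq by auto
      ultimately show False using pq(3) block_less_irrefl by metis
    qed
  qed
  show "inj_on snd P"
  proof (rule inj_onI)
    fix p q assume pq: "p \<in> P" "q \<in> P" "snd p = snd q"
    show "p = q"
    proof (rule ccontr)
      assume "p \<noteq> q"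
      then have "block_less (snd p) (snd q) \<or> block_less (snd q) (snd p)"
        using PP(2) pq unfolding monoS_def by blast
      moreover have "snd p \<noteq> {}" using IH_block[OF assms(2)] PP(1) pq by auto
      ultimately show False using pq(3) block_less_irrefl by metis
    qed
  qed
qed

lemma sum_fst_img: "inj_on fst P \<Longrightarrow> sum (\<lambda>p. Leb (fst p)) P = sum Leb (fst ` P)"
  by (simp add: sum.reindex o_def)
lemma sum_snd_img: "inj_on snd P \<Longrightarrow> sum (\<lambda>p. Leb (snd p)) P = sum Leb (snd ` P)"
  by (simp add: sum.reindex o_def)

lemma Leb_Ioo: "a \<le> b \<Longrightarrow> Leb {a<..<b} = b - a"
  unfolding Leb_def by simp

lemma block_less_asym: "A \<noteq> {} \<Longrightarrow> B \<noteq> {} \<Longrightarrow> block_less A B \<Longrightarrow> \<not> block_less B A"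
  unfolding block_less_def by force

lemma DS_le_cost:
  assumes "fst x \<in> IH" "fst y \<in> IH" "adm (fst x) (fst y) P"
  shows "sum (\<lambda>(U,V). \<bar>Leb U - Leb V\<bar>) P \<le> costS x y P"
proof -
  have fin: "finite P" and sub: "P \<subseteq> fst x \<times> fst y" using assms(3) unfolding adm_def by auto
  have "sum (\<lambda>(U,V). Leb U) P = sum Leb (fst ` P)"
    using sum_fst_img[OF adm_inj(1)[OF assms]] by (simp add: case_prod_unfold)
  also have "\<dots> \<le> IPnorm (fst x)"
    by (rule block_sum_le[OF IH_IP[OF assms(1)]]) (use fin sub in auto)
  finally show ?thesis using costS_ge1[where x=x and y=y and P=P] by linarith
qed

lemma matched:
  assumes "fst x \<in> IH" "fst y \<in> IH" "adm (fst x) (fst y) P" "U \<in> fst x" "costS x y P < Leb U"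
  shows "\<exists>V. (U,V) \<in> P"
proof (rule ccontr)
  assume nm: "\<not> (\<exists>V. (U,V) \<in> P)"
  have fin: "finite P" and sub: "P \<subseteq> fst x \<times> fst y" using assms(3) unfolding adm_def by auto
  have U: "U \<notin> fst ` P" using nm by force
  have "sum Leb (insert U (fst ` P)) \<le> IPnorm (fst x)"
    by (rule block_sum_le[OF IH_IP[OF assms(1)]]) (use fin sub assms(4) in auto)
  then have "Leb U + sum Leb (fst ` P) \<le> IPnorm (fst x)" using U fin by simp
  moreover have "sum (\<lambda>(U,V). Leb U) P = sum Leb (fst ` P)"
    using sum_fst_img[OF adm_inj(1)[OF assms(1-3)]] by (simp add: case_prod_unfold)
  ultimately show False using costS_ge1[where x=x and y=y and P=P] DS_nonneg[of P] assms(5) by linarith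
qed

lemma pos_left:
  assumes X: "fst x \<in> IH" and Y: "fst y \<in> IH" and A: "adm (fst x) (fst y) P"
    and UV: "(U,V) \<in> P" and Ud: "U = {a<..<b}" "a < b" and Vd: "V = {c<..<d}" "c < d"
    and C: "costS x y P \<le> e"
  shows "a - e \<le> c"
proof -
  define L where "L = IPnorm (fst x)"
  have fin: "finite P" and sub: "P \<subseteq> fst x \<times> fst y" and mo: "monoS P"
    using A unfolding adm_def by auto
  have injf: "inj_on fst P" and injs: "inj_on snd P" using adm_inj[OF X Y A] by auto
  define Lp where "Lp = {p\<in>P. block_less (fst p) U}"
  define Rp where "Rp = {p\<in>P. block_less U (fst p)}"
  have Une: "U \<noteq> {}" and Vne: "V \<noteq> {}" using Ud Vd by auto
  have ne_f: "fst p \<noteq> {}" if "p \<in> P" for p using IH_block[OF X] sub that by auto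
  have ne_s: "snd p \<noteq> {}" if "p \<in> P" for p using IH_block[OF Y] sub that by auto
  have cmp: "(block_less (fst p) U \<and> block_less (snd p) V) \<or> (block_less U (fst p) \<and> block_less V (snd p))"
    if "p \<in> P" "p \<noteq> (U,V)" for p
    using mo that UV unfolding monoS_def by (metis fst_conv snd_conv)
  have Pdec: "P = insert (U,V) (Lp \<union> Rp)"
    using cmp UV unfolding Lp_def Rp_def by auto
  have nLR: "(U,V) \<notin> Lp \<union> Rp" using block_less_irrefl[OF Une] unfolding Lp_def Rp_def by auto
  have dLR: "Lp \<inter> Rp = {}" using block_less_asym[OF _ Une] ne_f unfolding Lp_def Rp_def by blast
  have finL: "finite Lp" "finite Rp" using fin unfolding Lp_def Rp_def by auto
  have Lsnd: "block_less (snd p) V" if "p \<in> Lp" for p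
  proof -
    have "p \<in> P" "block_less (fst p) U" using that unfolding Lp_def by auto
    moreover have "p \<noteq> (U,V)" using that nLR by auto
    ultimately show ?thesis using cmp block_less_asym[OF Une ne_f] by blast
  qed
  have sumP: "sum (\<lambda>p. Leb (fst p)) P = Leb U + sum (\<lambda>p. Leb (fst p)) Lp + sum (\<lambda>p. Leb (fst p)) Rp"
    unfolding Pdec using nLR dLR finL by (simp add: sum.union_disjoint)
  have IPx: "is_IP_on (fst x) L" using IH_IP[OF X] unfolding L_def .
  have bL: "b \<le> L"
  proof -
    have "U \<in> fst x" using UV sub by auto
    then obtain a' b' where "a' < b'" "b' \<le> L" "U = {a'<..<b'}" using IPx unfolding is_IP_on_def by blast
    then show ?thesis using Ud by (metis greaterThanLessThan_eq_iff not_less)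
  qed
  have sumR: "sum (\<lambda>p. Leb (fst p)) Rp \<le> L - b"
  proof -
    have "sum (\<lambda>p. Leb (fst p)) Rp = sum Leb (fst ` Rp)"
      using injf by (intro sum_fst_img) (auto simp: Rp_def intro: inj_on_subset)
    also have "\<dots> \<le> measure lborel {b..L}"
    proof (rule block_sum_le_set[OF IPx])
      show "finite (fst ` Rp)" using finL by auto
      show "fst ` Rp \<subseteq> fst x" using sub unfolding Rp_def by auto
      show "{b..L} \<in> fmeasurable lborel" by (rule fmeasurable_compact) auto
      show "\<Union>(fst ` Rp) \<subseteq> {b..L}"
      proof
        fix z assume "z \<in> \<Union>(fst ` Rp)"
        then obtain p where p: "p \<in> Rp" "z \<in> fst p" by auto
        have "fst p \<in> fst x" using p sub unfolding Rp_def by auto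
        then obtain a' b' where ab': "a' < b'" "b' \<le> L" "fst p = {a'<..<b'}"
          using IPx unfolding is_IP_on_def by blast
        have "b \<le> a'" using block_less_end[of a' b' a b] p ab' Ud unfolding Rp_def by auto
        then show "z \<in> {b..L}" using p ab' by auto
      qed
    qed
    also have "\<dots> = L - b" using bL by simp
    finally show ?thesis .
  qed
  have sumL: "sum (\<lambda>p. Leb (fst p)) Lp \<le> a"
  proof -
    have "sum (\<lambda>p. Leb (fst p)) Lp = sum Leb (fst ` Lp)"
      using injf by (intro sum_fst_img) (auto simp: Lp_def intro: inj_on_subset)
    also have "\<dots> \<le> measure lborel {0..a}"
    proof (rule block_sum_le_set[OF IPx])
      show "finite (fst ` Lp)" using finL by auto
      show "fst ` Lp \<subseteq> fst x" using sub unfolding Lp_def by auto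
      show "{0..a} \<in> fmeasurable lborel" by (rule fmeasurable_compact) auto
      show "\<Union>(fst ` Lp) \<subseteq> {0..a}"
      proof
        fix z assume "z \<in> \<Union>(fst ` Lp)"
        then obtain p where p: "p \<in> Lp" "z \<in> fst p" by auto
        have "fst p \<in> fst x" using p sub unfolding Lp_def by auto
        then obtain a' b' where ab': "0 \<le> a'" "a' < b'" "fst p = {a'<..<b'}"
          using IPx unfolding is_IP_on_def by blast
        have "b' \<le> a" using block_less_end[of a b a' b'] p ab' Ud unfolding Lp_def by auto
        then show "z \<in> {0..a}" using p ab' by auto
      qed
    qed
    also have "\<dots> = a"
    proof -
      have "U \<in> fst x" using UV sub by auto
      then obtain a' b' where "0 \<le> a'" "a' < b'" "U = {a'<..<b'}" using IPx unfolding is_IP_on_def by blast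
      then have "0 \<le> a" using Ud by (metis greaterThanLessThan_eq_iff not_less)
      then show ?thesis by simp
    qed
    finally show ?thesis .
  qed
  have sumLs: "sum (\<lambda>p. Leb (snd p)) Lp \<le> c"
  proof -
    define LB where "LB = IPnorm (fst y)"
    have IPy: "is_IP_on (fst y) LB" using IH_IP[OF Y] unfolding LB_def .
    have "sum (\<lambda>p. Leb (snd p)) Lp = sum Leb (snd ` Lp)"
      using injs by (intro sum_snd_img) (auto simp: Lp_def intro: inj_on_subset)
    also have "\<dots> \<le> measure lborel {0..c}"
    proof (rule block_sum_le_set[OF IPy])
      show "finite (snd ` Lp)" using finL by auto
      show "snd ` Lp \<subseteq> fst y" using sub unfolding Lp_def by auto
      show "{0..c} \<in> fmeasurable lborel" by (rule fmeasurable_compact) auto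
      show "\<Union>(snd ` Lp) \<subseteq> {0..c}"
      proof
        fix z assume "z \<in> \<Union>(snd ` Lp)"
        then obtain p where p: "p \<in> Lp" "z \<in> snd p" by auto
        have "snd p \<in> fst y" using p sub unfolding Lp_def by auto
        then obtain a' b' where ab': "0 \<le> a'" "a' < b'" "snd p = {a'<..<b'}"
          using IPy unfolding is_IP_on_def by blast
        have "b' \<le> c" using block_less_end[of c d a' b'] Lsnd[OF p(1)] ab' Vd by auto
        then show "z \<in> {0..c}" using p ab' by auto
      qed
    qed
    also have "\<dots> = c"
    proof -
      have "V \<in> fst y" using UV sub by auto
      then obtain a' b' where "0 \<le> a'" "a' < b'" "V = {a'<..<b'}" using IPy unfolding is_IP_on_def by blast
      then have "0 \<le> c" using Vd by (metis greaterThanLessThan_eq_iff not_less)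
      then show ?thesis by simp
    qed
    finally show ?thesis .
  qed
  define DS where "DS Q = sum (\<lambda>p. \<bar>Leb (fst p) - Leb (snd p)\<bar>) Q" for Q
  have DSP: "DS P = sum (\<lambda>(U,V). \<bar>Leb U - Leb V\<bar>) P" unfolding DS_def by (simp add: case_prod_unfold)
  have DSL: "DS Lp \<le> DS P" unfolding DS_def
    by (rule sum_mono2[OF fin]) (auto simp: Lp_def)
  have diffL: "sum (\<lambda>p. Leb (fst p)) Lp - sum (\<lambda>p. Leb (snd p)) Lp \<le> DS Lp"
    unfolding DS_def sum_subtractf[symmetric] by (rule sum_mono) auto
  have c1: "e \<ge> DS P + L - sum (\<lambda>p. Leb (fst p)) P"
    using C costS_ge1[where x=x and y=y and P=P] DSP unfolding L_def by (simp add: case_prod_unfold)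
  have LU: "Leb U = b - a" using Ud Leb_Ioo by simp
  show ?thesis using c1 sumP sumR sumLs DSL diffL LU by linarith
qed

lemma pos_right:
  assumes X: "fst x \<in> IH" and Y: "fst y \<in> IH" and A: "adm (fst x) (fst y) P"
    and UV: "(U,V) \<in> P" and Ud: "U = {a<..<b}" "a < b" and Vd: "V = {c<..<d}" "c < d"
    and C: "costS x y P \<le> e"
  shows "c - e \<le> a"
proof -
  have fin: "finite P" using A unfolding adm_def by auto
  show ?thesis
  proof (rule pos_left[of y x "prod.swap ` P" V U c d a b])
    show "adm (fst y) (fst x) (prod.swap ` P)" by (rule adm_swap[OF A])
    show "(V, U) \<in> prod.swap ` P" using UV by force
    show "costS y x (prod.swap ` P) \<le> e" using costS_swap[OF fin] C by simp
  qed (use assms in auto)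
qed

lemma near:
  assumes X: "x \<in> Jspace" and Y: "y \<in> Jspace" and Z: "dJ x y = 0"
    and U: "U \<in> fst x" "U = {a<..<b}" "a < b" and e: "0 < e" "e < b - a"
  shows "\<exists>V c d. V \<in> fst y \<and> V = {c<..<d} \<and> c < d \<and> \<bar>c - a\<bar> \<le> e \<and> \<bar>d - b\<bar> \<le> 2*e
     \<and> \<bar>fblock (snd x) U - fblock (snd y) V\<bar> \<le> e"
proof -
  have XI: "fst x \<in> IH" and YI: "fst y \<in> IH" using X Y unfolding Jspace_def by auto
  obtain P where A: "adm (fst x) (fst y) P" and C: "costS x y P < e"
    using dJ_lessS[OF XI YI] Z e by auto
  have fin: "finite P" and sub: "P \<subseteq> fst x \<times> fst y" using A unfolding adm_def by auto
  have "costS x y P < Leb U" using C e U Leb_Ioo by simp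
  then obtain V where UV: "(U,V) \<in> P" using matched[OF XI YI A U(1)] by blast
  have V: "V \<in> fst y" using UV sub by auto
  then obtain c d where cd: "c < d" "V = {c<..<d}" using IH_blocks[OF YI] by blast
  have C': "costS x y P \<le> e" using C by simp
  have l: "a - e \<le> c" by (rule pos_left[OF XI YI A UV U(2,3) cd(2,1) C'])
  have r: "c - e \<le> a" by (rule pos_right[OF XI YI A UV U(2,3) cd(2,1) C'])
  have "\<bar>Leb U - Leb V\<bar> \<le> e"
    using DS_ge[OF fin UV] DS_le_cost[OF XI YI A] C by simp
  then have "\<bar>(b - a) - (d - c)\<bar> \<le> e" using U cd Leb_Ioo by simp
  moreover have "\<bar>fblock (snd x) U - fblock (snd y) V\<bar> \<le> e"
    using costS_ge3[OF fin UV, of x y] C by simp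
  ultimately show ?thesis using V cd l r
    by (intro exI[of _ V] exI[of _ c] exI[of _ d]) auto
qed

lemma small_zero:
  fixes t k :: real
  assumes "k > 0" "\<And>e. 0 < e \<Longrightarrow> e \<le> k \<Longrightarrow> \<bar>t\<bar> \<le> 2 * e"
  shows "t = 0"
proof (rule ccontr)
  assume "t \<noteq> 0"
  define e where "e = min k (\<bar>t\<bar> / 4)"
  have "0 < e" "e \<le> k" using assms(1) \<open>t \<noteq> 0\<close> unfolding e_def by auto
  then have "\<bar>t\<bar> \<le> 2 * e" by (rule assms(2))
  moreover have "2 * e < \<bar>t\<bar>" using \<open>t \<noteq> 0\<close> unfolding e_def by auto
  ultimately show False by simp
qed

lemma zero_sub:
  assumes X: "x \<in> Jspace" and Y: "y \<in> Jspace" and Z: "dJ x y = 0" and U: "U \<in> fst x"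
  shows "U \<in> fst y \<and> fblock (snd x) U = fblock (snd y) U"
proof -
  have XI: "fst x \<in> IH" and YI: "fst y \<in> IH" using X Y unfolding Jspace_def by auto
  obtain a b where ab: "a < b" "U = {a<..<b}" using IH_blocks[OF XI U] by blast
  define l where "l = b - a"
  define m where "m = (a + b) / 2"
  have lpos: "l > 0" using ab unfolding l_def by simp
  have mem: "m \<in> V" if "V = {c<..<d}" "\<bar>c - a\<bar> \<le> e" "\<bar>d - b\<bar> \<le> 2*e" "e \<le> l/8" for V c d e
    using that ab unfolding m_def l_def by (auto simp: abs_le_iff)
  obtain V0 c0 d0 where V0: "V0 \<in> fst y" "V0 = {c0<..<d0}" "c0 < d0" "\<bar>c0 - a\<bar> \<le> l/8" "\<bar>d0 - b\<bar> \<le> 2*(l/8)"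
    using near[OF X Y Z U ab(2,1), of "l/8"] lpos unfolding l_def by auto
  have mV0: "m \<in> V0" using mem[OF V0(2,4,5)] by simp
  have all: "\<bar>c0 - a\<bar> \<le> 2*e \<and> \<bar>d0 - b\<bar> \<le> 2*e \<and> \<bar>fblock (snd x) U - fblock (snd y) V0\<bar> \<le> 2*e"
    if e: "0 < e" "e \<le> l/8" for e
  proof -
    obtain V c d where V: "V \<in> fst y" "V = {c<..<d}" "c < d" "\<bar>c - a\<bar> \<le> e" "\<bar>d - b\<bar> \<le> 2*e"
      "\<bar>fblock (snd x) U - fblock (snd y) V\<bar> \<le> e"
      using near[OF X Y Z U ab(2,1), of e] e lpos unfolding l_def by auto
    have "m \<in> V" using mem[OF V(2,4,5) e(2)] .
    then have "V = V0" using blocks_disj_mem[OF YI V(1) V0(1) _ mV0] by blast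
    then have "c = c0" "d = d0" using V(2,3) V0(2,3) by (auto simp: greaterThanLessThan_eq_iff)
    then show ?thesis using V \<open>V = V0\<close> e by auto
  qed
  have "c0 - a = 0" by (rule small_zero[of "l/8"]) (use lpos all in auto)
  moreover have "d0 - b = 0" by (rule small_zero[of "l/8"]) (use lpos all in auto)
  moreover have "fblock (snd x) U - fblock (snd y) V0 = 0" by (rule small_zero[of "l/8"]) (use lpos all in auto)
  ultimately have "V0 = U" "fblock (snd x) U = fblock (snd y) V0" using V0 ab by auto
  then show ?thesis using V0(1) by auto
qed

lemma dJ_ge_top:
  assumes "fst x \<in> IH" "fst y \<in> IH"
  shows "\<bar>snd x top - snd y top\<bar> \<le> dJ x y"
proof -
  have ne: "{costS x y P | P. adm (fst x) (fst y) P} \<noteq> {}"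
    by (auto intro!: exI[of _ "{}"] simp: adm_def monoS_def)
  show ?thesis unfolding dJ_S[OF assms]
    by (rule cInf_greatest[OF ne]) (auto intro: costS_ge4)
qed

lemma one_side:
  fixes f g :: "ennreal \<Rightarrow> real"
  assumes IP: "is_IP_on \<eta> L"
    and gm: "mono g" and fc: "continuous (at_right z) f"
    and zL: "z < ennreal L"
    and eq: "\<And>s U. U \<in> \<eta> \<Longrightarrow> s \<in> U \<Longrightarrow> f (ennreal s) = g (ennreal s)"
  shows "g z \<le> f z"
proof (rule ccontr)
  assume "\<not> g z \<le> f z"
  then have lt: "f z < g z" by simp
  have "(f \<longlongrightarrow> f z) (at_right z)" using fc by (simp add: continuous_within)
  then have ev: "eventually (\<lambda>w. f w < g z) (at_right z)" using lt by (rule order_tendstoD)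
  obtain bnd where bnd: "bnd > z" "\<And>w. w > z \<Longrightarrow> w < bnd \<Longrightarrow> f w < g z"
    using ev unfolding eventually_at_right[OF zL] by blast
  define t where "t = enn2real z"
  have ztop: "z < top" using order.strict_trans[OF zL ennreal_less_top] .
  have zt: "z = ennreal t" unfolding t_def using ennreal_enn2real[OF ztop] by simp
  have t0: "t \<ge> 0" unfolding t_def by simp
  have tL: "t < L" using zL t0 unfolding zt by (simp add: ennreal_less_iff)
  define s1 where "s1 = (if bnd = top then L else min L (enn2real bnd))"
  have ts1: "t < s1"
  proof (cases "bnd = top")
    case True then show ?thesis unfolding s1_def using tL by simp
  next
    case False
    then have "bnd < top" by (simp add: less_top)
    then have be: "ennreal (enn2real bnd) = bnd" by (rule ennreal_enn2real)
    have "ennreal t < ennreal (enn2real bnd)" unfolding be using bnd(1) zt by simp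
    then have "t < enn2real bnd" using t0 ennreal_less_iff by blast
    then show ?thesis unfolding s1_def using False tL by simp
  qed
  have s1L: "s1 \<le> L" unfolding s1_def by auto
  have "{t<..<s1} \<inter> \<Union>\<eta> \<noteq> {}"
  proof
    assume emp: "{t<..<s1} \<inter> \<Union>\<eta> = {}"
    have sub: "{t<..<s1} \<subseteq> {0..L} - \<Union>\<eta>" using emp t0 s1L by auto
    have N: "{0..L} - \<Union>\<eta> \<in> null_sets lborel" using IP unfolding is_IP_on_def by auto
    have "{t<..<s1} \<in> null_sets lborel" by (rule null_sets_subset[OF N _ sub]) simp
    then have "measure lborel {t<..<s1} = 0" by (rule measure_eq_0_null_sets)
    then show False using ts1 by simp
  qed
  then obtain s U where s: "s \<in> {t<..<s1}" "U \<in> \<eta>" "s \<in> U" by blast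
  have zs: "z < ennreal s" using s(1) zt t0 ennreal_less_iff by auto
  have sb: "ennreal s < bnd"
  proof (cases "bnd = top")
    case True then show ?thesis by simp
  next
    case False
    then have "bnd < top" by (simp add: less_top)
    have "s < enn2real bnd" using s(1) False unfolding s1_def by simp
    then have "ennreal s < ennreal (enn2real bnd)" using s(1) t0 ennreal_less_iff by auto
    then show ?thesis using ennreal_enn2real[OF \<open>bnd < top\<close>] by simp
  qed
  have "f (ennreal s) < g z" using bnd(2)[OF zs sb] .
  also have "g z \<le> g (ennreal s)" using gm zs unfolding mono_def by (simp add: less_imp_le)
  also have "\<dots> = f (ennreal s)" using eq[OF s(2,3)] by simp
  finally show False by simp
qed

lemma JD:
  assumes "(\<eta>, f) \<in> Jspace"
  shows "\<eta> \<in> IH" "\<forall>x. 0 \<le> f x" "mono f" "\<forall>z. continuous (at_right z) f"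
    "\<forall>U\<in>\<eta>. \<forall>s\<in>U. \<forall>r\<in>U. f (ennreal s) = f (ennreal r)"
    "\<forall>z. ennreal (IPnorm \<eta>) \<le> z \<longrightarrow> f z = f (ennreal (IPnorm \<eta>))"
proof -
  have "(\<eta>, f) \<in> {(\<eta>, f). \<eta> \<in> IH
      \<and> (\<forall>x. 0 \<le> f x)
      \<and> mono f
      \<and> (\<forall>x. continuous (at_right x) f)
      \<and> (\<forall>U\<in>\<eta>. \<forall>x\<in>U. \<forall>y\<in>U. f (ennreal x) = f (ennreal y))
      \<and> (\<forall>x. ennreal (IPnorm \<eta>) \<le> x \<longrightarrow> f x = f (ennreal (IPnorm \<eta>)))}"
    using assms unfolding Jspace_def .
  then have H: "\<eta> \<in> IH
      \<and> (\<forall>x. 0 \<le> f x)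
      \<and> mono f
      \<and> (\<forall>x. continuous (at_right x) f)
      \<and> (\<forall>U\<in>\<eta>. \<forall>x\<in>U. \<forall>y\<in>U. f (ennreal x) = f (ennreal y))
      \<and> (\<forall>x. ennreal (IPnorm \<eta>) \<le> x \<longrightarrow> f x = f (ennreal (IPnorm \<eta>)))"
    unfolding mem_Collect_eq split_conv .
  then show "\<eta> \<in> IH" "\<forall>x. 0 \<le> f x" "mono f" "\<forall>z. continuous (at_right z) f"
    "\<forall>U\<in>\<eta>. \<forall>s\<in>U. \<forall>r\<in>U. f (ennreal s) = f (ennreal r)"
    "\<forall>z. ennreal (IPnorm \<eta>) \<le> z \<longrightarrow> f z = f (ennreal (IPnorm \<eta>))"
    by blast+
qed

lemma zero_eq:
  assumes X: "x \<in> Jspace" and Y: "y \<in> Jspace" and Z: "dJ x y = 0"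
  shows "x = y"
proof -
  obtain \<eta> f where x: "x = (\<eta>, f)" by fastforce
  obtain \<beta> g where y: "y = (\<beta>, g)" by fastforce
  have Z': "dJ y x = 0" using Z dJ_commute by simp
  have s1: "\<eta> \<subseteq> \<beta>" using zero_sub[OF X Y Z] x y by auto
  have s2: "\<beta> \<subseteq> \<eta>" using zero_sub[OF Y X Z'] x y by auto
  have eb: "\<eta> = \<beta>" using s1 s2 by auto
  have fb: "fblock f U = fblock g U" if "U \<in> \<eta>" for U using zero_sub[OF X Y Z] x y that by auto
  have X': "(\<eta>, f) \<in> Jspace" using X x by simp
  have Y': "(\<eta>, g) \<in> Jspace" using Y y eb by simp
  have XI: "\<eta> \<in> IH" using JD(1)[OF X'] .
  note Jf = JD(3-6)[OF X']
  note Jg = JD(3-6)[OF Y']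
  have top: "f top = g top" using dJ_ge_top[of x y] Z x y XI eb by simp
  define L where "L = IPnorm \<eta>"
  have IP: "is_IP_on \<eta> L" using IH_IP[OF XI] unfolding L_def .
  have eq: "f (ennreal s) = g (ennreal s)" if "U \<in> \<eta>" "s \<in> U" for s U
  proof -
    have ne: "U \<noteq> {}" using that by auto
    have sm: "(SOME r. r \<in> U) \<in> U" using ne by (simp add: some_in_eq)
    have "f (ennreal s) = fblock f U" unfolding fblock_def using Jf(3) that sm by blast
    also have "\<dots> = fblock g U" using fb that by simp
    also have "\<dots> = g (ennreal s)" unfolding fblock_def using Jg(3) that sm by metis
    finally show ?thesis .
  qed
  have "f z = g z" for z
  proof (cases "ennreal L \<le> z")
    case True
    have "f z = f (ennreal L)" unfolding L_def by (rule Jf(4)[rule_format]) (use True in \<open>simp add: L_def\<close>)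
    also have "\<dots> = f top" unfolding L_def by (rule Jf(4)[rule_format, of top, symmetric]) simp
    also have "\<dots> = g top" by (rule top)
    also have "\<dots> = g (ennreal L)" unfolding L_def by (rule Jg(4)[rule_format, of top]) simp
    also have "\<dots> = g z" unfolding L_def by (rule Jg(4)[rule_format, symmetric]) (use True in \<open>simp add: L_def\<close>)
    finally show ?thesis .
  next
    case False
    then have zL: "z < ennreal L" by simp
    have eq': "g (ennreal s) = f (ennreal s)" if "U \<in> \<eta>" "s \<in> U" for s U
      using eq[OF that] by simp
    have "g z \<le> f z" by (rule one_side[OF IP Jg(1) Jf(2)[rule_format] zL eq])
    moreover have "f z \<le> g z" by (rule one_side[OF IP Jf(1) Jg(2)[rule_format] zL eq'])
    ultimately show ?thesis by simp
  qed
  then have "f = g" by (rule ext)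
  then show ?thesis using x y eb by simp
qed

definition Df :: "(real set \<times> real set) set \<Rightarrow> real" where
  "Df P = sum (\<lambda>p. \<bar>Leb (fst p) - Leb (snd p)\<bar>) P"
definition Sf :: "(real set \<times> real set) set \<Rightarrow> real" where
  "Sf P = sum (\<lambda>p. Leb (fst p)) P"
definition Ss :: "(real set \<times> real set) set \<Rightarrow> real" where
  "Ss P = sum (\<lambda>p. Leb (snd p)) P"

lemma costS_alt: "costS x y P = max (max (Df P + IPnorm (fst x) - Sf P) (Df P + IPnorm (fst y) - Ss P))
   (max (Max (insert 0 ((\<lambda>p. \<bar>fblock (snd x) (fst p) - fblock (snd y) (snd p)\<bar>) ` P))) \<bar>snd x top - snd y top\<bar>)"
  unfolding costS_def Df_def Sf_def Ss_def by (simp add: case_prod_unfold)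

lemma alt_ge1: "Df P + IPnorm (fst x) - Sf P \<le> costS x y P"
  unfolding costS_alt by (rule max.coboundedI1, rule max.cobounded1)
lemma alt_ge2: "Df P + IPnorm (fst y) - Ss P \<le> costS x y P"
  unfolding costS_alt by (rule max.coboundedI1, rule max.cobounded2)

lemma Df_split: "finite P \<Longrightarrow> C \<subseteq> P \<Longrightarrow> Df P = Df C + Df (P - C)"
  unfolding Df_def by (subst sum.subset_diff[of C P]) (auto simp: add.commute)
lemma Sf_split: "finite P \<Longrightarrow> C \<subseteq> P \<Longrightarrow> Sf P = Sf C + Sf (P - C)"
  unfolding Sf_def by (subst sum.subset_diff[of C P]) (auto simp: add.commute)
lemma Ss_split: "finite P \<Longrightarrow> C \<subseteq> P \<Longrightarrow> Ss P = Ss C + Ss (P - C)"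
  unfolding Ss_def by (subst sum.subset_diff[of C P]) (auto simp: add.commute)
lemma Df_mono: "finite P \<Longrightarrow> C \<subseteq> P \<Longrightarrow> Df C \<le> Df P"
  unfolding Df_def by (rule sum_mono2) auto
lemma Sf_le: "Sf P \<le> Df P + Ss P"
proof -
  have "Sf P = sum (\<lambda>p. Leb (fst p) - Leb (snd p)) P + Ss P"
    unfolding Sf_def Ss_def by (simp add: sum_subtractf)
  also have "sum (\<lambda>p. Leb (fst p) - Leb (snd p)) P \<le> Df P"
    unfolding Df_def by (rule sum_mono) auto
  finally show ?thesis by simp
qed
lemma Ss_le: "Ss P \<le> Df P + Sf P"
proof -
  have "Ss P = sum (\<lambda>p. Leb (snd p) - Leb (fst p)) P + Sf P"
    unfolding Sf_def Ss_def by (simp add: sum_subtractf)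
  also have "sum (\<lambda>p. Leb (snd p) - Leb (fst p)) P \<le> Df P"
    unfolding Df_def by (rule sum_mono) auto
  finally show ?thesis by simp
qed

lemma two_blocks_sum:
  assumes "\<beta> \<in> IH" "finite A" "finite B" "A \<subseteq> \<beta>" "B \<subseteq> \<beta>" "A \<inter> B = {}"
  shows "sum Leb A + sum Leb B \<le> IPnorm \<beta>"
proof -
  have "sum Leb (A \<union> B) \<le> IPnorm \<beta>"
    by (rule block_sum_le[OF IH_IP[OF assms(1)]]) (use assms in auto)
  then show ?thesis using assms by (simp add: sum.union_disjoint)
qed

lemma J_IH: "x \<in> Jspace \<Longrightarrow> fst x \<in> IH"
  using JD(1)[of "fst x" "snd x"] by simp

lemma compose_cost:
  assumes X: "fst x \<in> IH" and Y: "fst y \<in> IH" and Z: "fst z \<in> IH"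
    and A1: "adm (fst x) (fst y) P1" and A2: "adm (fst y) (fst z) P2"
  shows "\<exists>P. adm (fst x) (fst z) P \<and> costS x z P \<le> costS x y P1 + costS y z P2"
proof -
  have fin1: "finite P1" and sub1: "P1 \<subseteq> fst x \<times> fst y" and mo1: "monoS P1" using A1 unfolding adm_def by auto
  have fin2: "finite P2" and sub2: "P2 \<subseteq> fst y \<times> fst z" and mo2: "monoS P2" using A2 unfolding adm_def by auto
  have if1: "inj_on fst P1" and is1: "inj_on snd P1" using adm_inj[OF X Y A1] by auto
  have if2: "inj_on fst P2" and is2: "inj_on snd P2" using adm_inj[OF Y Z A2] by auto
  define C1 where "C1 = {p\<in>P1. snd p \<in> fst ` P2}"
  define r :: "real set \<times> real set \<Rightarrow> real set \<times> real set"
    where "r p = (THE q. q \<in> P2 \<and> fst q = snd p)" for p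
  have r1: "r p \<in> P2 \<and> fst (r p) = snd p" if "p \<in> C1" for p
  proof -
    have "snd p \<in> fst ` P2" using that unfolding C1_def by simp
    then obtain q where q0: "snd p = fst q" "q \<in> P2" by (rule imageE)
    then have q: "q \<in> P2" "fst q = snd p" by auto
    have u: "\<And>q'. q' \<in> P2 \<and> fst q' = snd p \<Longrightarrow> q' = q"
    proof -
      fix q' assume "q' \<in> P2 \<and> fst q' = snd p"
      then show "q' = q" using inj_onD[OF if2, of q' q] q by auto
    qed
    have "r p = q" unfolding r_def
    proof (rule the_equality)
      show "q \<in> P2 \<and> fst q = snd p" using q by blast
      show "\<And>q'. q' \<in> P2 \<and> fst q' = snd p \<Longrightarrow> q' = q" by (rule u)
    qed
    then show ?thesis using q by simp
  qed
  have C1sub: "C1 \<subseteq> P1" unfolding C1_def by auto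
  have finC: "finite C1" using fin1 C1sub finite_subset by blast
  have rinj: "inj_on r C1"
  proof (rule inj_onI)
    fix p p' assume "p \<in> C1" "p' \<in> C1" "r p = r p'"
    then have "snd p = snd p'" using r1[OF \<open>p \<in> C1\<close>] r1[OF \<open>p' \<in> C1\<close>] by simp
    then show "p = p'" using inj_onD[OF is1] C1sub \<open>p \<in> C1\<close> \<open>p' \<in> C1\<close> by blast
  qed
  define h where "h p = (fst p, snd (r p))" for p
  have hinj: "inj_on h C1"
  proof (rule inj_onI)
    fix p p' assume "p \<in> C1" "p' \<in> C1" "h p = h p'"
    then have "fst p = fst p'" unfolding h_def by simp
    then show "p = p'" using inj_onD[OF if1] C1sub \<open>p \<in> C1\<close> \<open>p' \<in> C1\<close> by blast
  qed
  define Q where "Q = r ` C1"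
  have Qsub: "Q \<subseteq> P2" unfolding Q_def using r1 by auto
  have Qchar: "q \<in> Q" if qa: "q \<in> P2" and qb: "fst q \<in> snd ` P1" for q
  proof -
    obtain p where p0: "fst q = snd p" "p \<in> P1" using qb by (rule imageE)
    then have p: "p \<in> P1" "snd p = fst q" by auto
    then have pC: "p \<in> C1" unfolding C1_def using qa by auto
    have "fst (r p) = fst q" using r1[OF pC] p by simp
    then have "r p = q" using inj_onD[OF if2] r1[OF pC] qa by blast
    then show ?thesis unfolding Q_def using pC by blast
  qed
  define P where "P = h ` C1"
  have finP: "finite P" unfolding P_def using finC by simp
  have finQ: "finite Q" unfolding Q_def using finC by simp
  have ne_s1: "snd p \<noteq> {}" if "p \<in> P1" for p using IH_block[OF Y] sub1 that by auto
  have admP: "adm (fst x) (fst z) P"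
    unfolding adm_def
  proof (intro conjI)
    show "finite P" by (rule finP)
    show "P \<subseteq> fst x \<times> fst z" unfolding P_def h_def using C1sub sub1 sub2 r1 by force
    show "monoS P" unfolding monoS_def
    proof (intro ballI impI)
      fix u v assume u: "u \<in> P" and v: "v \<in> P" and uv: "u \<noteq> v"
      obtain p where p: "p \<in> C1" "u = h p" using u unfolding P_def by auto
      obtain p' where p': "p' \<in> C1" "v = h p'" using v unfolding P_def by auto
      have pp: "p \<noteq> p'" using uv p p' by auto
      have rr: "r p \<noteq> r p'" using inj_onD[OF rinj] pp p(1) p'(1) by blast
      have m1: "(block_less (fst p) (fst p') \<and> block_less (snd p) (snd p')) \<or>
                (block_less (fst p') (fst p) \<and> block_less (snd p') (snd p))"
        using mo1 p(1) p'(1) C1sub pp unfolding monoS_def by blast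
      have m2: "(block_less (fst (r p)) (fst (r p')) \<and> block_less (snd (r p)) (snd (r p'))) \<or>
                (block_less (fst (r p')) (fst (r p)) \<and> block_less (snd (r p')) (snd (r p)))"
        using mo2 r1[OF p(1)] r1[OF p'(1)] rr unfolding monoS_def by blast
      have pin: "p \<in> P1" "p' \<in> P1" using C1sub p(1) p'(1) by auto
      have nes: "snd p \<noteq> {}" "snd p' \<noteq> {}" using ne_s1[OF pin(1)] ne_s1[OF pin(2)] by auto
      have as1: "\<not> (block_less (snd p) (snd p') \<and> block_less (snd p') (snd p))"
        using block_less_asym[OF nes] by blast
      show "(block_less (fst u) (fst v) \<and> block_less (snd u) (snd v)) \<or>
            (block_less (fst v) (fst u) \<and> block_less (snd v) (snd u))"
        using m1 m2 as1 r1[OF p(1)] r1[OF p'(1)] unfolding p(2) p'(2) h_def by auto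
    qed
  qed
  have DfP: "Df P \<le> Df C1 + Df Q"
  proof -
    have "Df P = (\<Sum>p\<in>C1. \<bar>Leb (fst p) - Leb (snd (r p))\<bar>)"
      unfolding Df_def P_def by (subst sum.reindex[OF hinj]) (simp add: h_def)
    also have "\<dots> \<le> (\<Sum>p\<in>C1. \<bar>Leb (fst p) - Leb (snd p)\<bar> + \<bar>Leb (fst (r p)) - Leb (snd (r p))\<bar>)"
      by (rule sum_mono) (use r1 in \<open>simp add: abs_triangle_ineq[THEN order_trans]\<close>)
    also have "\<dots> = Df C1 + Df Q"
      unfolding Df_def Q_def sum.distrib by (subst sum.reindex[OF rinj]) (simp add: r1)
    finally show ?thesis .
  qed
  have SfP: "Sf P = Sf C1" unfolding Sf_def P_def by (subst sum.reindex[OF hinj]) (simp add: h_def)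
  have SsP: "Ss P = Ss Q" unfolding Ss_def P_def Q_def
    by (subst sum.reindex[OF hinj], subst sum.reindex[OF rinj]) (simp add: h_def)
  have pack1: "Ss (P1 - C1) + Sf P2 \<le> IPnorm (fst y)"
  proof -
    have e1: "Ss (P1 - C1) = sum Leb (snd ` (P1 - C1))"
      unfolding Ss_def by (rule sum_snd_img) (use is1 in \<open>auto intro: inj_on_subset\<close>)
    have e2: "Sf P2 = sum Leb (fst ` P2)" unfolding Sf_def by (rule sum_fst_img[OF if2])
    have "sum Leb (snd ` (P1 - C1)) + sum Leb (fst ` P2) \<le> IPnorm (fst y)"
      by (rule two_blocks_sum[OF Y]) (use fin1 fin2 sub1 sub2 in \<open>auto simp: C1_def\<close>)
    then show ?thesis using e1 e2 by simp
  qed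
  have pack2: "Sf (P2 - Q) + Ss P1 \<le> IPnorm (fst y)"
  proof -
    have e1: "Sf (P2 - Q) = sum Leb (fst ` (P2 - Q))"
      unfolding Sf_def by (rule sum_fst_img) (use if2 in \<open>auto intro: inj_on_subset\<close>)
    have e2: "Ss P1 = sum Leb (snd ` P1)" unfolding Ss_def by (rule sum_snd_img[OF is1])
    have dj: "fst ` (P2 - Q) \<inter> snd ` P1 = {}" using Qchar by force
    have "sum Leb (fst ` (P2 - Q)) + sum Leb (snd ` P1) \<le> IPnorm (fst y)"
      by (rule two_blocks_sum[OF Y]) (use fin1 fin2 sub1 sub2 dj in auto)
    then show ?thesis using e1 e2 by simp
  qed
  have sp1: "Df P1 = Df C1 + Df (P1 - C1)" "Sf P1 = Sf C1 + Sf (P1 - C1)" "Ss P1 = Ss C1 + Ss (P1 - C1)"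
    using Df_split[OF fin1 C1sub] Sf_split[OF fin1 C1sub] Ss_split[OF fin1 C1sub] by auto
  have sp2: "Df P2 = Df Q + Df (P2 - Q)" "Sf P2 = Sf Q + Sf (P2 - Q)" "Ss P2 = Ss Q + Ss (P2 - Q)"
    using Df_split[OF fin2 Qsub] Sf_split[OF fin2 Qsub] Ss_split[OF fin2 Qsub] by auto
  have l1: "Sf (P1 - C1) \<le> Df (P1 - C1) + Ss (P1 - C1)" by (rule Sf_le)
  have l2: "Ss (P2 - Q) \<le> Df (P2 - Q) + Sf (P2 - Q)" by (rule Ss_le)
  have DQ: "Df Q \<le> Df P2" by (rule Df_mono[OF fin2 Qsub])
  have DC: "Df C1 \<le> Df P1" by (rule Df_mono[OF fin1 C1sub])
  have dpos: "Df (P1 - C1) \<ge> 0" "Df (P2 - Q) \<ge> 0" unfolding Df_def by (auto intro: sum_nonneg)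
  define B where "B = costS x y P1 + costS y z P2"
  have c12: "Df P1 + IPnorm (fst x) - Sf P1 \<le> costS x y P1" "Df P1 + IPnorm (fst y) - Ss P1 \<le> costS x y P1"
    by (rule alt_ge1, rule alt_ge2)
  have c23: "Df P2 + IPnorm (fst y) - Sf P2 \<le> costS y z P2" "Df P2 + IPnorm (fst z) - Ss P2 \<le> costS y z P2"
    by (rule alt_ge1, rule alt_ge2)
  have b1: "Df P + IPnorm (fst x) - Sf P \<le> B"
    unfolding B_def using DfP SfP pack1 sp1 l1 DQ c12(1) c23(1) by linarith
  have b2: "Df P + IPnorm (fst z) - Ss P \<le> B"
    unfolding B_def using DfP SsP pack2 sp2 l2 DC c12(2) c23(2) by linarith
  have b3: "\<bar>fblock (snd x) (fst u) - fblock (snd z) (snd u)\<bar> \<le> B" if u: "u \<in> P" for u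
  proof -
    obtain p where p: "p \<in> C1" "u = h p" using u unfolding P_def by auto
    have pP1: "p \<in> P1" using p C1sub by auto
    have rP2: "r p \<in> P2" and fr: "fst (r p) = snd p" using r1[OF p(1)] by auto
    have "\<bar>fblock (snd x) (fst p) - fblock (snd y) (snd p)\<bar> \<le> costS x y P1"
      using costS_ge3[OF fin1, of "fst p" "snd p" x y] pP1 by simp
    moreover have "\<bar>fblock (snd y) (fst (r p)) - fblock (snd z) (snd (r p))\<bar> \<le> costS y z P2"
      using costS_ge3[OF fin2, of "fst (r p)" "snd (r p)" y z] rP2 by simp
    ultimately show ?thesis unfolding B_def p(2) h_def using fr by (simp add: abs_diff_le_iff)
  qed
  have b4: "\<bar>snd x top - snd z top\<bar> \<le> B"
    unfolding B_def using costS_ge4[of x y P1] costS_ge4[of y z P2] by linarith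
  have B0: "0 \<le> B" unfolding B_def using costS_nonneg[of x y P1] costS_nonneg[of y z P2] by linarith
  have b5: "Max (insert 0 ((\<lambda>p. \<bar>fblock (snd x) (fst p) - fblock (snd z) (snd p)\<bar>) ` P)) \<le> B"
    using finP B0 b3 by (subst Max_le_iff) auto
  have "costS x z P \<le> B" unfolding costS_alt using b1 b2 b4 b5 by (simp only: max.bounded_iff)
  then show ?thesis using admP unfolding B_def by blast
qed

lemma dJ_triangle:
  assumes X: "x \<in> Jspace" and Y: "y \<in> Jspace" and Z: "z \<in> Jspace"
  shows "dJ x z \<le> dJ x y + dJ y z"
proof -
  have XI: "fst x \<in> IH" and YI: "fst y \<in> IH" and ZI: "fst z \<in> IH"
    using J_IH[OF X] J_IH[OF Y] J_IH[OF Z] by auto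
  have E: "dJ x z \<le> dJ x y + dJ y z + 2 * e" if e: "e > 0" for e
  proof -
    obtain P1 where P1: "adm (fst x) (fst y) P1" "costS x y P1 < dJ x y + e"
      using dJ_lessS[OF XI YI, of "dJ x y + e"] e by auto
    obtain P2 where P2: "adm (fst y) (fst z) P2" "costS y z P2 < dJ y z + e"
      using dJ_lessS[OF YI ZI, of "dJ y z + e"] e by auto
    obtain P where P: "adm (fst x) (fst z) P" "costS x z P \<le> costS x y P1 + costS y z P2"
      using compose_cost[OF XI YI ZI P1(1) P2(1)] by blast
    have "dJ x z \<le> costS x z P" by (rule dJ_leS[OF XI ZI P(1)])
    then show ?thesis using P(2) P1(2) P2(2) by linarith
  qed
  show ?thesis
  proof (rule field_le_epsilon)
    fix e :: real assume "0 < e"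
    then show "dJ x z \<le> dJ x y + dJ y z + e" using E[of "e/2"] by simp
  qed
qed

lemma J_metric: "Metric_space Jspace dJ"
proof
  show "\<And>x y. 0 \<le> dJ x y" by (rule dJ_nonneg)
  show "\<And>x y. dJ x y = dJ y x" by (rule dJ_commute)
  show "\<And>x y. x \<in> Jspace \<Longrightarrow> y \<in> Jspace \<Longrightarrow> dJ x y = 0 \<longleftrightarrow> x = y"
    using zero_eq dJ_refl by blast
  show "\<And>x y z. x \<in> Jspace \<Longrightarrow> y \<in> Jspace \<Longrightarrow> z \<in> Jspace \<Longrightarrow> dJ x z \<le> dJ x y + dJ y z"
    by (rule dJ_triangle)
qed

definition blk :: "nat \<Rightarrow> real \<Rightarrow> real set set" where
  "blk n a = (\<lambda>k. {a * real k / real n <..< a * real (Suc k) / real n}) ` {..<n}"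

lemma IP_empty: "is_IP_on {} 0"
  unfolding is_IP_on_def disjoint_def by (auto intro: countable_imp_null_set_lborel)

lemma blk_bounds:
  assumes "n > 0" "a > 0" "k < n"
  shows "0 \<le> a * real k / real n" "a * real k / real n < a * real (Suc k) / real n"
    "a * real (Suc k) / real n \<le> a"
proof -
  show "0 \<le> a * real k / real n" using assms by simp
  show "a * real k / real n < a * real (Suc k) / real n" using assms by (simp add: divide_strict_right_mono)
  have "real (Suc k) \<le> real n" using assms by simp
  then have "a * real (Suc k) \<le> a * real n" using assms by simp
  then show "a * real (Suc k) / real n \<le> a" using assms by (simp add: divide_le_eq)
qed

lemma blk_cover:
  assumes "n > 0" "a > 0" "x \<in> {0..a}" "x \<notin> \<Union>(blk n a)"
  shows "x \<in> (\<lambda>k. a * real k / real n) ` {..n}"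
proof -
  define u where "u = x * real n / a"
  have u0: "u \<ge> 0" using assms unfolding u_def by simp
  define k where "k = nat \<lfloor>u\<rfloor>"
  have k1: "real k \<le> u" and k2: "u < real k + 1" unfolding k_def using u0 by linarith+
  have xu: "x = a * u / real n" unfolding u_def using assms by simp
  have lo: "a * real k / real n \<le> x" unfolding xu using k1 assms
    by (simp add: divide_right_mono)
  have hi: "x < a * real (Suc k) / real n" unfolding xu using k2 assms
    by (simp add: divide_strict_right_mono)
  show ?thesis
  proof (cases "k < n")
    case True
    have "x \<notin> {a * real k / real n <..< a * real (Suc k) / real n}"
      using assms(4) True unfolding blk_def by blast
    then have "x = a * real k / real n" using lo hi by auto
    then show ?thesis using True by auto
  next
    case False
    then have "real n \<le> real k" by simp
    then have "a * real n \<le> a * real k" using assms by (simp add: mult_left_mono)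
    then have "a \<le> a * real k / real n" using assms by (simp add: le_divide_eq mult.commute)
    then have "a \<le> x" using lo assms by simp
    then have "x = a * real n / real n" using assms by simp
    then show ?thesis by (intro image_eqI[of _ _ n]) auto
  qed
qed

lemma blk_IP:
  assumes "n > 0" "a > 0"
  shows "is_IP_on (blk n a) a"
  unfolding is_IP_on_def
proof (intro conjI)
  show "0 \<le> a" using assms by simp
  show "\<forall>U\<in>blk n a. \<exists>c d. 0 \<le> c \<and> c < d \<and> d \<le> a \<and> U = {c<..<d}"
    unfolding blk_def using blk_bounds[OF assms] by blast
  show "disjoint (blk n a)"
    unfolding disjoint_def pairwise_def
  proof (intro ballI impI)
    fix U V assume U: "U \<in> blk n a" and V: "V \<in> blk n a" and UV: "U \<noteq> V"
    obtain k where k: "k < n" "U = {a * real k / real n <..< a * real (Suc k) / real n}"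
      using U unfolding blk_def by auto
    obtain j where j: "j < n" "V = {a * real j / real n <..< a * real (Suc j) / real n}"
      using V unfolding blk_def by auto
    have "k \<noteq> j" using UV k j by auto
    then consider "Suc k \<le> j" | "Suc j \<le> k" by linarith
    then show "disjnt U V"
    proof cases
      case 1
      then have "a * real (Suc k) / real n \<le> a * real j / real n"
        using assms by (simp add: divide_right_mono)
      then show ?thesis unfolding k j disjnt_def by auto
    next
      case 2
      then have "a * real (Suc j) / real n \<le> a * real k / real n"
        using assms by (simp add: divide_right_mono)
      then show ?thesis unfolding k j disjnt_def by auto
    qed
  qed
  show "{0..a} - \<Union>(blk n a) \<in> null_sets lborel"
  proof (rule countable_imp_null_set_lborel)
    have "{0..a} - \<Union>(blk n a) \<subseteq> (\<lambda>k. a * real k / real n) ` {..n}"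
      using blk_cover[OF assms] by blast
    then show "countable ({0..a} - \<Union>(blk n a))"
      by (rule countable_subset) auto
  qed
qed

lemma blk_Leb:
  assumes "n > 0" "a > 0" "U \<in> blk n a"
  shows "Leb U = a / real n"
proof -
  obtain k where k: "k < n" "U = {a * real k / real n <..< a * real (Suc k) / real n}"
    using assms(3) unfolding blk_def by auto
  have "Leb U = a * real (Suc k) / real n - a * real k / real n"
    unfolding k(2) by (rule Leb_Ioo) (use blk_bounds[OF assms(1,2) k(1)] in simp)
  also have "\<dots> = (a * real (Suc k) - a * real k) / real n" by (simp add: diff_divide_distrib)
  also have "\<dots> = a / real n" by (simp add: distrib_left)
  finally show ?thesis .
qed

definition p0 :: "real set set \<times> (ennreal \<Rightarrow> real)" where
  "p0 = ({}, \<lambda>_. 0)"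

lemma zero_J: "is_IP_on \<eta> L \<Longrightarrow> (\<eta>, \<lambda>_. 0) \<in> Jspace"
  unfolding Jspace_def IH_def by (auto simp: mono_def)

lemma p0_J: "p0 \<in> Jspace"
  unfolding p0_def using zero_J[OF IP_empty] .

lemma q_J: "n > 0 \<Longrightarrow> a > 0 \<Longrightarrow> (blk n a, \<lambda>_. 0) \<in> Jspace"
  using zero_J[OF blk_IP] by blast

lemma dJ_p0_q:
  assumes "n > 0" "a > 0"
  shows "dJ p0 (blk n a, \<lambda>_. 0) \<le> a"
proof -
  have I1: "fst p0 \<in> IH" using IP_empty unfolding p0_def IH_def by auto
  have I2: "fst (blk n a, \<lambda>_::ennreal. 0::real) \<in> IH" using blk_IP[OF assms] unfolding IH_def by auto
  have A: "adm (fst p0) (fst (blk n a, \<lambda>_::ennreal. 0::real)) {}" by (simp add: adm_def monoS_def)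
  have "dJ p0 (blk n a, \<lambda>_. 0) \<le> costS p0 (blk n a, \<lambda>_. 0) {}" by (rule dJ_leS[OF I1 I2 A])
  also have "\<dots> = a"
    unfolding costS_def p0_def using IPnorm_eq[OF IP_empty] IPnorm_eq[OF blk_IP[OF assms]] assms
    by simp
  finally show ?thesis .
qed

definition Cset :: "real \<Rightarrow> (real set set \<times> (ennreal \<Rightarrow> real)) set" where
  "Cset c = {y \<in> Jspace. IPnorm (fst y) < c}"
definition Bset :: "real \<Rightarrow> (real set set \<times> (ennreal \<Rightarrow> real)) set" where
  "Bset t = {y \<in> Jspace. \<exists>U\<in>fst y. Leb U > t}"

interpretation J: Metric_space Jspace dJ by (rule J_metric)

lemma Cset_open: "openin (Metric_space.mtopology Jspace dJ) (Cset c)"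
  unfolding J.openin_mtopology
proof (intro conjI allI impI)
  show "Cset c \<subseteq> Jspace" unfolding Cset_def by auto
  fix y assume y: "y \<in> Cset c"
  have yJ: "y \<in> Jspace" and yc: "IPnorm (fst y) < c" using y unfolding Cset_def by auto
  show "\<exists>r>0. J.mball y r \<subseteq> Cset c"
  proof (intro exI conjI)
    show "c - IPnorm (fst y) > 0" using yc by simp
    show "J.mball y (c - IPnorm (fst y)) \<subseteq> Cset c"
    proof
      fix z assume z: "z \<in> J.mball y (c - IPnorm (fst y))"
      then have zJ: "z \<in> Jspace" and d: "dJ y z < c - IPnorm (fst y)" by auto
      have YI: "fst y \<in> IH" and ZI: "fst z \<in> IH" using J_IH yJ zJ by auto
      obtain P where A: "adm (fst y) (fst z) P" and C: "costS y z P < c - IPnorm (fst y)"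
        using dJ_lessS[OF YI ZI d] by blast
      have fin: "finite P" and sub: "P \<subseteq> fst y \<times> fst z" using A unfolding adm_def by auto
      have "Sf P = sum Leb (fst ` P)" unfolding Sf_def by (rule sum_fst_img[OF adm_inj(1)[OF YI ZI A]])
      also have "\<dots> \<le> IPnorm (fst y)"
        by (rule block_sum_le[OF IH_IP[OF YI]]) (use fin sub in auto)
      finally have "Sf P \<le> IPnorm (fst y)" .
      moreover have "Df P + IPnorm (fst z) - Ss P \<le> costS y z P" by (rule alt_ge2)
      moreover have "Ss P \<le> Df P + Sf P" by (rule Ss_le)
      ultimately have "IPnorm (fst z) < c" using C by linarith
      then show "z \<in> Cset c" using zJ unfolding Cset_def by auto
    qed
  qed
qed

lemma Bset_open:
  assumes t: "t > 0"
  shows "openin (Metric_space.mtopology Jspace dJ) (Bset t)"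
  unfolding J.openin_mtopology
proof (intro conjI allI impI)
  show "Bset t \<subseteq> Jspace" unfolding Bset_def by auto
  fix y assume y: "y \<in> Bset t"
  obtain U where yJ: "y \<in> Jspace" and U: "U \<in> fst y" "Leb U > t" using y unfolding Bset_def by auto
  show "\<exists>r>0. J.mball y r \<subseteq> Bset t"
  proof (intro exI conjI)
    show "Leb U - t > 0" using U by simp
    show "J.mball y (Leb U - t) \<subseteq> Bset t"
    proof
      fix z assume z: "z \<in> J.mball y (Leb U - t)"
      then have zJ: "z \<in> Jspace" and d: "dJ y z < Leb U - t" by auto
      have YI: "fst y \<in> IH" and ZI: "fst z \<in> IH" using J_IH yJ zJ by auto
      obtain P where A: "adm (fst y) (fst z) P" and C: "costS y z P < Leb U - t"
        using dJ_lessS[OF YI ZI d] by blast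
      have fin: "finite P" and sub: "P \<subseteq> fst y \<times> fst z" using A unfolding adm_def by auto
      have "costS y z P < Leb U" using C t by simp
      then obtain V where UV: "(U,V) \<in> P" using matched[OF YI ZI A U(1)] by blast
      have "\<bar>Leb U - Leb V\<bar> \<le> costS y z P"
        using DS_ge[OF fin UV] DS_le_cost[OF YI ZI A] by simp
      then have "Leb V > t" using C by simp
      moreover have "V \<in> fst z" using UV sub by auto
      ultimately show "z \<in> Bset t" using zJ unfolding Bset_def by auto
    qed
  qed
qed

lemma Bset_mono: "t \<le> t' \<Longrightarrow> Bset t' \<subseteq> Bset t"
  unfolding Bset_def by force

lemma IPnorm_empty: "IPnorm {} = 0"
  by (rule IPnorm_eq[OF IP_empty])

theorem lemma3p14:
  shows "\<not> locally_compact_space (Metric_space.mtopology Jspace dJ)"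
proof
  assume lc: "locally_compact_space (Metric_space.mtopology Jspace dJ)"
  have "p0 \<in> topspace (Metric_space.mtopology Jspace dJ)" using p0_J by simp
  then obtain U K where U: "openin (Metric_space.mtopology Jspace dJ) U"
    and K: "compactin (Metric_space.mtopology Jspace dJ) K" and pU: "p0 \<in> U" and UK: "U \<subseteq> K"
    using lc unfolding locally_compact_space_def by blast
  obtain r where r: "r > 0" "J.mball p0 r \<subseteq> U" using U pU unfolding J.openin_mtopology by blast
  define a where "a = r / 2"
  have a: "a > 0" "a < r" using r unfolding a_def by auto
  define \<U> where "\<U> = insert (Cset (a/2)) (range (\<lambda>n::nat. Bset (1 / real (Suc n))))"
  have opens: "\<forall>V\<in>\<U>. openin (Metric_space.mtopology Jspace dJ) V"
    unfolding \<U>_def using Cset_open Bset_open by auto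
  have cov: "K \<subseteq> \<Union>\<U>"
  proof
    fix y assume yK: "y \<in> K"
    have "K \<subseteq> topspace (Metric_space.mtopology Jspace dJ)" using K by (rule compactin_subset_topspace)
    then have yJ: "y \<in> Jspace" using yK by auto
    show "y \<in> \<Union>\<U>"
    proof (cases "fst y = {}")
      case True
      then have "IPnorm (fst y) < a/2" using IPnorm_empty a by simp
      then have "y \<in> Cset (a/2)" using yJ unfolding Cset_def by auto
      then show ?thesis unfolding \<U>_def by blast
    next
      case False
      then obtain V where V: "V \<in> fst y" by blast
      have "Leb V > 0" using IH_block[OF J_IH[OF yJ] V] by simp
      then obtain n where n: "inverse (real (Suc n)) < Leb V" using reals_Archimedean by blast
      then have "y \<in> Bset (1 / real (Suc n))" using yJ V unfolding Bset_def by (auto simp: field_simps)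
      then show ?thesis unfolding \<U>_def by blast
    qed
  qed
  have KK: "\<forall>\<V>. (\<forall>x\<in>\<V>. openin (Metric_space.mtopology Jspace dJ) x) \<and> K \<subseteq> \<Union>\<V> \<longrightarrow>
      (\<exists>F. finite F \<and> F \<subseteq> \<V> \<and> K \<subseteq> \<Union>F)"
    using K unfolding compactin_def by blast
  have "\<exists>F. finite F \<and> F \<subseteq> \<U> \<and> K \<subseteq> \<Union>F" using KK opens cov by simp
  then obtain F where F0: "finite F \<and> F \<subseteq> \<U> \<and> K \<subseteq> \<Union>F" by (rule exE)
  then have F: "finite F" "F \<subseteq> \<U>" "K \<subseteq> \<Union>F" by simp_all
  have FB: "F - {Cset (a/2)} \<subseteq> (\<lambda>n::nat. Bset (1 / real (Suc n))) ` UNIV"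
  proof
    fix V assume "V \<in> F - {Cset (a/2)}"
    then have "V \<in> \<U>" "V \<noteq> Cset (a/2)" using F(2) by auto
    then show "V \<in> (\<lambda>n::nat. Bset (1 / real (Suc n))) ` UNIV" unfolding \<U>_def by simp
  qed
  have "finite (F - {Cset (a/2)})" using F(1) by simp
  then have "\<exists>C\<subseteq>UNIV. finite C \<and> F - {Cset (a/2)} = (\<lambda>n::nat. Bset (1 / real (Suc n))) ` C"
    by (rule finite_subset_image[OF _ FB])
  then obtain N where N0: "N \<subseteq> UNIV \<and> finite N \<and> F - {Cset (a/2)} = (\<lambda>n::nat. Bset (1 / real (Suc n))) ` N"
    by (rule exE)
  then have N: "finite N" "F - {Cset (a/2)} \<subseteq> (\<lambda>n::nat. Bset (1 / real (Suc n))) ` N" by simp_all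
  define M where "M = Max (insert 0 N)"
  have NM: "\<And>n. n \<in> N \<Longrightarrow> n \<le> M" unfolding M_def using N(1) by simp
  have KC: "K \<subseteq> Cset (a/2) \<union> Bset (1 / real (Suc M))"
  proof
    fix y assume "y \<in> K"
    then obtain V where V: "V \<in> F" "y \<in> V" using F(3) by blast
    show "y \<in> Cset (a/2) \<union> Bset (1 / real (Suc M))"
    proof (cases "V = Cset (a/2)")
      case True then show ?thesis using V by simp
    next
      case False
      then obtain n where n: "n \<in> N" "V = Bset (1 / real (Suc n))" using N(2) V(1) by blast
      have "1 / real (Suc M) \<le> 1 / real (Suc n)" using NM[OF n(1)] by (simp add: frac_le)
      then have "V \<subseteq> Bset (1 / real (Suc M))" using n(2) Bset_mono by blast
      then show ?thesis using V by blast
    qed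
  qed
  define m where "m = Suc (nat \<lceil>a * real (Suc M)\<rceil>)"
  have m0: "m > 0" unfolding m_def by simp
  have am: "a * real (Suc M) < real m" unfolding m_def by linarith
  have am2: "a / real m < 1 / real (Suc M)"
    using am m0 by (simp add: divide_less_eq field_simps)
  define q where "q = (blk m a, (\<lambda>_. 0) :: ennreal \<Rightarrow> real)"
  have qJ: "q \<in> Jspace" unfolding q_def by (rule q_J[OF m0 a(1)])
  have "dJ p0 q \<le> a" unfolding q_def by (rule dJ_p0_q[OF m0 a(1)])
  then have "q \<in> J.mball p0 r" using p0_J qJ a by simp
  then have "q \<in> K" using r(2) UK by blast
  then have "q \<in> Cset (a/2) \<union> Bset (1 / real (Suc M))" using KC by blast
  moreover have "q \<notin> Cset (a/2)"
    using IPnorm_eq[OF blk_IP[OF m0 a(1)]] a unfolding Cset_def q_def by simp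
  moreover have "q \<notin> Bset (1 / real (Suc M))"
    using blk_Leb[OF m0 a(1)] am2 unfolding Bset_def q_def by auto
  ultimately show False by blast
qed

end
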